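(* Let $U$ be a nonnegative progressively measurable process and $W$ a utility process associated to $(h_{EZ},U)$. Suppose there exists $t_0\ge0$ such that $U_t=0$ for all $t<t_0$. Let $A\in\mathcal F_{t_0}$ and define $\widetilde U_t=\mathbb E[\mathbf 1_A\mid\mathcal F_t]U_t$. Then $\widetilde W_t=\mathbb E[\mathbf 1_AW_{t\vee t_0}\mid\mathcal F_t]$ is a utility process associated to $(h_{EZ},\widetilde U)$.
   Context: Work on a filtered probability space $(\Omega,\mathcal F,(\mathcal F_t)_{t\ge0},\mathbb P)$ with complete continuous filtration and trivial $\mathcal F_0$. $\theta>1$ is fixed and $\rho=\frac{\theta-1}{\theta}$; $h_{EZ}(u,w)=uw^\rho$. For a nonnegative progressively measurable $U$, a utility process (solution) associated to $(h_{EZ},U)$ is a nonnegative càdlàg progressively measurable $W$ with $\mathbb E\int_0^\infty U_sW_s^\rho ds<\infty$ and $W_t=\mathbb E[\int_t^\infty U_sW_s^\rho ds\mid\mathcal F_t]$ for all $t\ge0$. *)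

theory Defs
  imports "HOL-Probability.Probability"
begin

definition std_filtration :: "'a measure \<Rightarrow> (real \<Rightarrow> 'a measure) \<Rightarrow> bool" where
  "std_filtration M F \<longleftrightarrow>
     prob_space M \<and>
     (\<forall>t\<ge>0. space (F t) = space M \<and> sets (F t) \<subseteq> sets M) \<and>
     (\<forall>s t. 0 \<le> s \<longrightarrow> s \<le> t \<longrightarrow> sets (F s) \<subseteq> sets (F t)) \<and>
     (\<forall>N. N \<subseteq> space M \<and> (\<exists>B\<in>null_sets M. N \<subseteq> B) \<longrightarrow> N \<in> sets (F 0)) \<and>
     (\<forall>t\<ge>0. sets (F t) = (\<Inter>s\<in>{t<..}. sets (F s))) \<and>
     (\<forall>t>0. sets (F t) = sigma_sets (space M) (\<Union>s\<in>{0..<t}. sets (F s))) \<and>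
     (\<forall>A\<in>sets (F 0). measure M A = 0 \<or> measure M A = 1)"

definition nonneg_process :: "'a measure \<Rightarrow> (real \<Rightarrow> 'a \<Rightarrow> real) \<Rightarrow> bool" where
  "nonneg_process M X \<longleftrightarrow> (\<forall>t\<ge>0. \<forall>\<omega>\<in>space M. X t \<omega> \<ge> 0)"

definition prog_measurable :: "'a measure \<Rightarrow> (real \<Rightarrow> 'a measure) \<Rightarrow> (real \<Rightarrow> 'a \<Rightarrow> real) \<Rightarrow> bool" where
  "prog_measurable M F X \<longleftrightarrow>
     (\<forall>t\<ge>0. (\<lambda>(s,\<omega>). X s \<omega>) \<in> borel_measurable (restrict_space borel {0..t} \<Otimes>\<^sub>M F t))"

definition cadlag :: "'a measure \<Rightarrow> (real \<Rightarrow> 'a \<Rightarrow> real) \<Rightarrow> bool" where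
  "cadlag M X \<longleftrightarrow> (\<forall>\<omega>\<in>space M. \<forall>t\<ge>0.
     continuous (at_right t) (\<lambda>s. X s \<omega>) \<and>
     (t > 0 \<longrightarrow> (\<exists>l. ((\<lambda>s. X s \<omega>) \<longlongrightarrow> l) (at_left t))))"

definition h_EZ :: "real \<Rightarrow> real \<Rightarrow> real \<Rightarrow> real" where
  "h_EZ \<theta> u w = u * w powr ((\<theta> - 1) / \<theta>)"

text \<open>Utility process associated to (h,U) (U is assumed nonnegative progressive separately).\<close>
definition utility_process :: "'a measure \<Rightarrow> (real \<Rightarrow> 'a measure) \<Rightarrow> (real \<Rightarrow> real \<Rightarrow> real)
    \<Rightarrow> (real \<Rightarrow> 'a \<Rightarrow> real) \<Rightarrow> (real \<Rightarrow> 'a \<Rightarrow> real) \<Rightarrow> bool" where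
  "utility_process M F h U W \<longleftrightarrow>
     nonneg_process M W \<and> cadlag M W \<and> prog_measurable M F W \<and>
     (\<integral>\<^sup>+\<omega>. (\<integral>\<^sup>+ s\<in>{0..}. ennreal (h (U s \<omega>) (W s \<omega>)) \<partial>lborel) \<partial>M) < \<infinity> \<and>
     (\<forall>t\<ge>0. AE \<omega> in M. W t \<omega> =
        real_cond_exp M (F t)
          (\<lambda>\<omega>. enn2real (\<integral>\<^sup>+ s\<in>{t..}. ennreal (h (U s \<omega>) (W s \<omega>)) \<partial>lborel)) \<omega>)"

end

theory Submission
  imports Defs
begin

fun ust :: "real \<Rightarrow> real \<Rightarrow> (nat \<Rightarrow> real) \<Rightarrow> nat \<Rightarrow> bool" where
  "ust a b x 0 = (x 0 \<le> a)"
| "ust a b x (Suc k) = (if ust a b x k then \<not> b \<le> x (Suc k) else x (Suc k) \<le> a)"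

fun ucnt :: "real \<Rightarrow> real \<Rightarrow> (nat \<Rightarrow> real) \<Rightarrow> nat \<Rightarrow> nat" where
  "ucnt a b x 0 = 0"
| "ucnt a b x (Suc k) = ucnt a b x k + (if ust a b x k \<and> b \<le> x (Suc k) then 1 else 0)"

definition ugain :: "real \<Rightarrow> real \<Rightarrow> (nat \<Rightarrow> real) \<Rightarrow> nat \<Rightarrow> real" where
  "ugain a b x n = (\<Sum>k<n. if ust a b x k then x (Suc k) - x k else 0)"

lemma upcross_inv:
  assumes "a < b"
  shows "if ust a b x n then ugain a b x n \<ge> (b-a) * real (ucnt a b x n) + x n - a
         else ugain a b x n \<ge> (b-a) * real (ucnt a b x n)"
proof (induction n)
  case 0
  then show ?case by (simp add: ugain_def)
next
  case (Suc k)
  have g: "ugain a b x (Suc k) = ugain a b x k + (if ust a b x k then x (Suc k) - x k else 0)"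
    by (simp add: ugain_def)
  show ?case
  proof (cases "ust a b x k")
    case True
    then show ?thesis using Suc g assms by (auto simp: algebra_simps)
  next
    case False
    then show ?thesis using Suc g assms by (auto simp: algebra_simps)
  qed
qed

lemma upcross_ineq:
  assumes "a < b"
  shows "(b-a) * real (ucnt a b x n) \<le> ugain a b x n + max 0 (a - x n)"
  using upcross_inv[OF assms, of x n] by (auto split: if_splits)

lemma ucnt_mono: "k \<le> n \<Longrightarrow> ucnt a b x k \<le> ucnt a b x n"
proof (induction n)
  case 0
  then show ?case by simp
next
  case (Suc n)
  then show ?case by (cases "k = Suc n") auto
qed

lemma ust_low: "x i \<le> a \<Longrightarrow> a < b \<Longrightarrow> ust a b x i"
  by (cases i) auto

lemma ust_keep:
  assumes "ust a b x i" "i \<le> k"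
  shows "(ust a b x k \<and> ucnt a b x i \<le> ucnt a b x k) \<or> ucnt a b x i + 1 \<le> ucnt a b x k"
  using assms(2)
proof (induction k)
  case 0
  then show ?case using assms(1) by simp
next
  case (Suc k)
  show ?case
  proof (cases "i = Suc k")
    case True
    then show ?thesis using assms(1) by simp
  next
    case False
    then have "i \<le> k" using Suc.prems by simp
    then show ?thesis using Suc.IH by auto
  qed
qed

lemma ust_up:
  assumes "ust a b x i" "i < j" "b \<le> x j"
  shows "ucnt a b x i + 1 \<le> ucnt a b x j"
proof -
  obtain j' where j: "j = Suc j'" "i \<le> j'" using assms(2) by (cases j) auto
  from ust_keep[OF assms(1) j(2)] show ?thesis
    using j assms(3) by auto
qed

lemma chain_idx:
  assumes ab: "a < b"
    and mono: "\<And>i j. i < j \<Longrightarrow> j < 2*N \<Longrightarrow> p i < p j"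
    and lo: "\<And>i. i < N \<Longrightarrow> x (p (2*i)) \<le> a"
    and hi: "\<And>i. i < N \<Longrightarrow> b \<le> x (p (2*i+1))"
  shows "\<And>m. 0 < m \<Longrightarrow> m \<le> N \<Longrightarrow> m \<le> ucnt a b x (p (2*m - 1))"
proof -
  fix m :: nat
  assume "0 < m" "m \<le> N"
  then show "m \<le> ucnt a b x (p (2*m - 1))"
  proof (induction m)
    case 0
    then show ?case by simp
  next
    case (Suc m)
    have st: "ust a b x (p (2*m))" using lo[of m] Suc.prems ab by (intro ust_low) auto
    have up: "ucnt a b x (p (2*m)) + 1 \<le> ucnt a b x (p (2*m+1))"
      using ust_up[OF st] mono[of "2*m" "2*m+1"] hi[of m] Suc.prems by auto
    show ?case
    proof (cases "m = 0")
      case True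
      then show ?thesis using up by simp
    next
      case False
      then have ih: "m \<le> ucnt a b x (p (2*m - 1))" using Suc by auto
      have "ucnt a b x (p (2*m - 1)) \<le> ucnt a b x (p (2*m))"
        using mono[of "2*m-1" "2*m"] Suc.prems False by (intro ucnt_mono) auto
      then show ?thesis using ih up by (simp add: numeral_2_eq_2)
    qed
  qed
qed

definition is_chain :: "(real \<Rightarrow> real) \<Rightarrow> real set \<Rightarrow> real \<Rightarrow> real \<Rightarrow> nat \<Rightarrow> real list \<Rightarrow> bool" where
  "is_chain f D a b N l \<longleftrightarrow> length l = 2*N \<and> sorted_wrt (<) l \<and> set l \<subseteq> D \<and>
     (\<forall>i<N. f (l!(2*i)) \<le> a \<and> b \<le> f (l!(2*i+1)))"

lemma chain_ucnt:
  assumes ab: "a < b" and tau: "sorted_wrt (<) \<tau>"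
    and ch: "is_chain f (set \<tau>) a b N l"
  shows "N \<le> ucnt a b (\<lambda>k. f (\<tau>!k)) (length \<tau> - 1)"
proof (cases "N = 0")
  case True
  then show ?thesis by simp
next
  case False
  define p where "p i = (SOME k. k < length \<tau> \<and> \<tau>!k = l!i)" for i
  have len: "length l = 2*N" and sl: "sorted_wrt (<) l" and sub: "set l \<subseteq> set \<tau>"
    using ch by (auto simp: is_chain_def)
  have p: "p i < length \<tau> \<and> \<tau>!(p i) = l!i" if "i < 2*N" for i
  proof -
    have "l!i \<in> set \<tau>" using sub that len by auto
    then have "\<exists>k. k < length \<tau> \<and> \<tau>!k = l!i" by (simp add: in_set_conv_nth)
    then show ?thesis unfolding p_def by (rule someI_ex)
  qed
  have mono: "p i < p j" if "i < j" "j < 2*N" for i j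
  proof (rule ccontr)
    assume "\<not> p i < p j"
    then have "p j \<le> p i" by simp
    have lij: "l!i < l!j" using sl that len by (simp add: sorted_wrt_nth_less)
    have pi: "p i < length \<tau>" "\<tau>!(p i) = l!i" using p[of i] that by auto
    have pj: "p j < length \<tau>" "\<tau>!(p j) = l!j" using p[of j] that by auto
    show False
    proof (cases "p j = p i")
      case True
      then show False using pi pj lij by simp
    next
      case False
      then have "p j < p i" using \<open>p j \<le> p i\<close> by simp
      then have "\<tau>!(p j) < \<tau>!(p i)" using tau pi(1) by (simp add: sorted_wrt_nth_less)
      then show False using pi pj lij by simp
    qed
  qed
  have x_eq: "(\<lambda>k. f (\<tau>!k)) (p i) = f (l!i)" if "i < 2*N" for i
    using p[OF that] by simp
  have "N \<le> ucnt a b (\<lambda>k. f (\<tau>!k)) (p (2*N - 1))"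
    apply (rule chain_idx[where x="\<lambda>k. f (\<tau>!k)" and N=N and p=p, OF ab])
    using mono ch x_eq False by (auto simp: is_chain_def)
  also have "\<dots> \<le> ucnt a b (\<lambda>k. f (\<tau>!k)) (length \<tau> - 1)"
    using p[of "2*N-1"] False by (intro ucnt_mono) auto
  finally show ?thesis .
qed


locale filt =
  fixes M :: "'a measure" and F :: "real \<Rightarrow> 'a measure"
  assumes std: "std_filtration M F"
begin

lemma stdE:
  "prob_space M"
  "\<forall>t\<ge>0. space (F t) = space M \<and> sets (F t) \<subseteq> sets M"
  "\<forall>s t. 0 \<le> s \<longrightarrow> s \<le> t \<longrightarrow> sets (F s) \<subseteq> sets (F t)"
  "\<forall>N. N \<subseteq> space M \<and> (\<exists>B\<in>null_sets M. N \<subseteq> B) \<longrightarrow> N \<in> sets (F 0)"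
  "\<forall>t\<ge>0. sets (F t) = (\<Inter>s\<in>{t<..}. sets (F s))"
  using std[unfolded std_filtration_def, THEN conjunct1]
    std[unfolded std_filtration_def, THEN conjunct2, THEN conjunct1]
    std[unfolded std_filtration_def, THEN conjunct2, THEN conjunct2, THEN conjunct1]
    std[unfolded std_filtration_def, THEN conjunct2, THEN conjunct2, THEN conjunct2, THEN conjunct1]
    std[unfolded std_filtration_def, THEN conjunct2, THEN conjunct2, THEN conjunct2, THEN conjunct2, THEN conjunct1]
  by - (assumption)+

lemma prob: "prob_space M" by (rule stdE(1))

sublocale prob_space M by (rule prob)

lemma spaceF: "t \<ge> 0 \<Longrightarrow> space (F t) = space M" using stdE(2) by auto
lemma setsF: "t \<ge> 0 \<Longrightarrow> sets (F t) \<subseteq> sets M" using stdE(2) by auto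
lemma monoF: "0 \<le> s \<Longrightarrow> s \<le> t \<Longrightarrow> sets (F s) \<subseteq> sets (F t)"
  using stdE(3) by auto
lemma subalg: "t \<ge> 0 \<Longrightarrow> subalgebra M (F t)"
  by (simp add: subalgebra_def spaceF setsF)
lemma subalg2: "0 \<le> s \<Longrightarrow> s \<le> t \<Longrightarrow> subalgebra (F t) (F s)"
  by (simp add: subalgebra_def spaceF monoF)
lemma sfs: "t \<ge> 0 \<Longrightarrow> sigma_finite_subalgebra M (F t)"
  apply (rule finite_measure_subalgebra_is_sigma_finite)
  apply (rule finite_measure_subalgebra.intro)
  using prob apply (simp add: prob_space_def)
  apply (rule finite_measure_subalgebra_axioms.intro)
  by (rule subalg)
lemma measF: "t \<ge> 0 \<Longrightarrow> f \<in> F t \<rightarrow>\<^sub>M N \<Longrightarrow> f \<in> M \<rightarrow>\<^sub>M N"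
  by (rule measurable_from_subalg[OF subalg])
lemma measF2: "0 \<le> s \<Longrightarrow> s \<le> t \<Longrightarrow> f \<in> F s \<rightarrow>\<^sub>M N \<Longrightarrow> f \<in> F t \<rightarrow>\<^sub>M N"
  by (rule measurable_from_subalg[OF subalg2])
lemma setsF2: "0 \<le> s \<Longrightarrow> s \<le> t \<Longrightarrow> A \<in> sets (F s) \<Longrightarrow> A \<in> sets (F t)"
  using monoF by blast
lemma setsF1: "0 \<le> t \<Longrightarrow> A \<in> sets (F t) \<Longrightarrow> A \<in> sets M"
  using setsF by blast

definition cx :: "('a \<Rightarrow> real) \<Rightarrow> real \<Rightarrow> 'a \<Rightarrow> real" where
  "cx Y s = real_cond_exp M (F (max 0 s)) Y"

lemma cx_measF: "cx Y s \<in> borel_measurable (F (max 0 s))"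
  unfolding cx_def by simp

lemma cx_meas[measurable]: "cx Y s \<in> borel_measurable M"
  by (rule measF[OF _ cx_measF]) simp

lemma cx_int: "integrable M Y \<Longrightarrow> integrable M (cx Y s)"
  unfolding cx_def
  by (rule sigma_finite_subalgebra.real_cond_exp_int(1)[OF sfs]) auto

lemma cx_intA:
  assumes "integrable M Y" "s \<ge> 0" "A \<in> sets (F s)"
  shows "(\<integral>x. indicator A x * cx Y s x \<partial>M) = (\<integral>x. indicator A x * Y x \<partial>M)"
proof -
  have "(\<integral> x \<in> A. Y x \<partial>M) = (\<integral>x \<in> A. real_cond_exp M (F s) Y x \<partial>M)"
    by (rule sigma_finite_subalgebra.real_cond_exp_intA[OF sfs]) (use assms in auto)
  then show ?thesis using assms(2) by (simp add: cx_def set_lebesgue_integral_def)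
qed

lemma cx_pos:
  assumes "integrable M Y" "AE x in M. 0 \<le> Y x"
  shows "AE x in M. 0 \<le> cx Y s x"
  unfolding cx_def
  by (rule sigma_finite_subalgebra.real_cond_exp_pos[OF sfs]) (use assms in auto)

lemma ust_sets:
  assumes tau: "sorted_wrt (<) \<tau>" "\<forall>s\<in>set \<tau>. 0 \<le> s" and k: "k < length \<tau>"
  shows "{\<omega>\<in>space M. ust a b (\<lambda>i. cx Y (\<tau>!i) \<omega>) k} \<in> sets (F (\<tau>!k))"
  using k
proof (induction k)
  case 0
  have nn: "0 \<le> \<tau>!0" using tau 0 by auto
  then have m: "cx Y (\<tau>!0) \<in> borel_measurable (F (\<tau>!0))"
    using cx_measF[of Y "\<tau>!0"] by simp
  have "cx Y (\<tau>!0) -` {..a} \<inter> space (F (\<tau>!0)) \<in> sets (F (\<tau>!0))"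
    by (rule measurable_sets[OF m]) simp
  moreover have "cx Y (\<tau>!0) -` {..a} \<inter> space (F (\<tau>!0)) = {\<omega>\<in>space M. ust a b (\<lambda>i. cx Y (\<tau>!i) \<omega>) 0}"
    using spaceF[OF nn] by auto
  ultimately show ?case by simp
next
  case (Suc k)
  have nn: "0 \<le> \<tau>!k" "0 \<le> \<tau>!Suc k" using tau Suc.prems by auto
  have lt: "\<tau>!k < \<tau>!Suc k" using tau Suc.prems by (simp add: sorted_wrt_nth_less)
  define S where "S = {\<omega>\<in>space M. ust a b (\<lambda>i. cx Y (\<tau>!i) \<omega>) k}"
  define f where "f = cx Y (\<tau>!Suc k)"
  have S: "S \<in> sets (F (\<tau>!Suc k))"
    unfolding S_def using Suc.IH Suc.prems nn lt by (auto intro!: setsF2[of "\<tau>!k" "\<tau>!Suc k"])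
  have m: "f \<in> borel_measurable (F (\<tau>!Suc k))"
    using cx_measF[of Y "\<tau>!Suc k"] nn by (simp add: f_def)
  have s1: "f -` {..<b} \<inter> space (F (\<tau>!Suc k)) \<in> sets (F (\<tau>!Suc k))"
    by (rule measurable_sets[OF m]) simp
  have s2: "f -` {..a} \<inter> space (F (\<tau>!Suc k)) \<in> sets (F (\<tau>!Suc k))"
    by (rule measurable_sets[OF m]) simp
  have sp: "space (F (\<tau>!Suc k)) = space M" using spaceF[OF nn(2)] .
  have eq: "{\<omega>\<in>space M. ust a b (\<lambda>i. cx Y (\<tau>!i) \<omega>) (Suc k)}
     = (S \<inter> (f -` {..<b} \<inter> space (F (\<tau>!Suc k)))) \<union>
       ((space (F (\<tau>!Suc k)) - S) \<inter> (f -` {..a} \<inter> space (F (\<tau>!Suc k))))"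
    unfolding sp S_def f_def by auto
  have i1: "S \<inter> (f -` {..<b} \<inter> space (F (\<tau>!Suc k))) \<in> sets (F (\<tau>!Suc k))"
    by (rule sets.Int[OF S s1])
  have i2: "space (F (\<tau>!Suc k)) - S \<in> sets (F (\<tau>!Suc k))" by (rule sets.Diff[OF sets.top S])
  have i3: "(space (F (\<tau>!Suc k)) - S) \<inter> (f -` {..a} \<inter> space (F (\<tau>!Suc k))) \<in> sets (F (\<tau>!Suc k))"
    by (rule sets.Int[OF i2 s2])
  show ?case unfolding eq by (rule sets.Un[OF i1 i3])
qed

lemma chain_pred:
  assumes "finite G"
  shows "{\<omega>\<in>space M. \<exists>l. is_chain (\<lambda>s. cx Y s \<omega>) G a b N l} \<in> sets M"
proof -
  let ?L = "{l. set l \<subseteq> G \<and> length l = 2*N}"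
  have fin: "finite ?L" by (rule finite_lists_length_eq[OF assms])
  have eq: "{\<omega>\<in>space M. \<exists>l. is_chain (\<lambda>s. cx Y s \<omega>) G a b N l}
      = {\<omega>\<in>space M. \<exists>l\<in>?L. is_chain (\<lambda>s. cx Y s \<omega>) G a b N l}"
    by (auto simp: is_chain_def)
  have "Measurable.pred M (\<lambda>\<omega>. \<exists>l\<in>?L. is_chain (\<lambda>s. cx Y s \<omega>) G a b N l)"
    apply (rule pred_intros_finite(4)[OF fin])
    unfolding is_chain_def by measurable
  then show ?thesis unfolding eq by (simp add: pred_def)
qed

lemma upcross_bound:
  assumes tau: "sorted_wrt (<) \<tau>" "\<tau> \<noteq> []" "\<forall>s\<in>set \<tau>. 0 \<le> s" and ab: "a < b"
    and Y: "integrable M Y" "AE \<omega> in M. 0 \<le> Y \<omega>"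
  shows "real N * prob {\<omega>\<in>space M. \<exists>l. is_chain (\<lambda>s. cx Y s \<omega>) (set \<tau>) a b N l}
           \<le> max 0 a / (b - a)"
proof -
  define n where "n = length \<tau> - 1"
  define xs where "xs \<omega> = (\<lambda>k. cx Y (\<tau>!k) \<omega>)" for \<omega>
  define C where "C = {\<omega>\<in>space M. \<exists>l. is_chain (\<lambda>s. cx Y s \<omega>) (set \<tau>) a b N l}"
  define S where "S k = {\<omega>\<in>space M. ust a b (xs \<omega>) k}" for k
  have Cs: "C \<in> sets M" unfolding C_def by (rule chain_pred) simp
  have nlt: "n < length \<tau>" using tau(2) by (simp add: n_def)
  have Sk: "S k \<in> sets (F (\<tau>!k))" if "k < length \<tau>" for k
  proof -
    have "0 \<le> \<tau>!k" using tau that by auto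
    then show ?thesis
      using ust_sets[OF tau(1) tau(3) that, of a b Y]
      by (simp add: S_def xs_def)
  qed
  have Sk2: "S k \<in> sets (F (\<tau>!Suc k))" if "Suc k < length \<tau>" for k
    using Sk[of k] that tau by (auto intro!: setsF2[of "\<tau>!k" "\<tau>!Suc k"] simp: sorted_wrt_nth_less less_imp_le)
  have SkM: "S k \<in> sets M" if "k < length \<tau>" for k
    using Sk[OF that] tau that by (auto intro!: setsF1[of "\<tau>!k"])
  have xint: "integrable M (\<lambda>\<omega>. xs \<omega> k)" for k
    unfolding xs_def by (rule cx_int[OF Y(1)])
  have term0: "(\<integral>\<omega>. indicator (S k) \<omega> * (xs \<omega> (Suc k) - xs \<omega> k) \<partial>M) = 0" if "k < n" for k
  proof -
    have k1: "Suc k < length \<tau>" using that n_def nlt by simp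
    have nn: "0 \<le> \<tau>!k" "0 \<le> \<tau>!Suc k" using tau k1 by auto
    have i1: "integrable M (\<lambda>\<omega>. indicator (S k) \<omega> * xs \<omega> (Suc k))"
      using integrable_mult_indicator[OF SkM xint, of k "Suc k"] k1 by simp
    have i2: "integrable M (\<lambda>\<omega>. indicator (S k) \<omega> * xs \<omega> k)"
      using integrable_mult_indicator[OF SkM xint, of k k] k1 by simp
    have "(\<integral>\<omega>. indicator (S k) \<omega> * (xs \<omega> (Suc k) - xs \<omega> k) \<partial>M)
        = (\<integral>\<omega>. indicator (S k) \<omega> * xs \<omega> (Suc k) \<partial>M) - (\<integral>\<omega>. indicator (S k) \<omega> * xs \<omega> k \<partial>M)"
      using i1 i2 by (simp add: right_diff_distrib)
    also have "(\<integral>\<omega>. indicator (S k) \<omega> * xs \<omega> (Suc k) \<partial>M) = (\<integral>\<omega>. indicator (S k) \<omega> * Y \<omega> \<partial>M)"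
      unfolding xs_def using cx_intA[OF Y(1) nn(2) Sk2[OF k1]] .
    also have "(\<integral>\<omega>. indicator (S k) \<omega> * xs \<omega> k \<partial>M) = (\<integral>\<omega>. indicator (S k) \<omega> * Y \<omega> \<partial>M)"
      unfolding xs_def using cx_intA[OF Y(1) nn(1) Sk[of k]] k1 by simp
    finally show ?thesis by simp
  qed
  have ug: "ugain a b (xs \<omega>) n = (\<Sum>k<n. indicator (S k) \<omega> * (xs \<omega> (Suc k) - xs \<omega> k))"
    if "\<omega> \<in> space M" for \<omega>
    unfolding ugain_def S_def using that by (intro sum.cong) (auto simp: indicator_def)
  have tint: "integrable M (\<lambda>\<omega>. indicator (S k) \<omega> * (xs \<omega> (Suc k) - xs \<omega> k))" if "k < n" for k
  proof -
    have ii: "integrable M (\<lambda>\<omega>. xs \<omega> (Suc k) - xs \<omega> k)" using xint by auto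
    have "k < length \<tau>" using that nlt by simp
    then show ?thesis using integrable_mult_indicator[OF SkM ii] by simp
  qed
  have ugint: "integrable M (\<lambda>\<omega>. ugain a b (xs \<omega>) n)"
  proof -
    have "integrable M (\<lambda>\<omega>. (\<Sum>k<n. indicator (S k) \<omega> * (xs \<omega> (Suc k) - xs \<omega> k)))"
      by (rule Bochner_Integration.integrable_sum) (use tint in auto)
    moreover have "integrable M (\<lambda>\<omega>. ugain a b (xs \<omega>) n) = integrable M (\<lambda>\<omega>. (\<Sum>k<n. indicator (S k) \<omega> * (xs \<omega> (Suc k) - xs \<omega> k)))"
      by (rule Bochner_Integration.integrable_cong[OF refl ug])
    ultimately show ?thesis by simp
  qed
  have ug0: "(\<integral>\<omega>. ugain a b (xs \<omega>) n \<partial>M) = 0"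
  proof -
    have "(\<integral>\<omega>. ugain a b (xs \<omega>) n \<partial>M)
        = (\<integral>\<omega>. (\<Sum>k<n. indicator (S k) \<omega> * (xs \<omega> (Suc k) - xs \<omega> k)) \<partial>M)"
      by (rule Bochner_Integration.integral_cong[OF refl ug])
    also have "\<dots> = (\<Sum>k<n. (\<integral>\<omega>. indicator (S k) \<omega> * (xs \<omega> (Suc k) - xs \<omega> k) \<partial>M))"
      by (rule Bochner_Integration.integral_sum) (use tint in auto)
    also have "\<dots> = 0" using term0 by simp
    finally show ?thesis .
  qed
  have mint: "integrable M (\<lambda>\<omega>. max 0 (a - xs \<omega> n))"
    using xint[of n] by (intro integrable_max) auto
  have mle: "(\<integral>\<omega>. max 0 (a - xs \<omega> n) \<partial>M) \<le> max 0 a"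
  proof -
    have "AE \<omega> in M. max 0 (a - xs \<omega> n) \<le> max 0 a"
      using cx_pos[OF Y, of "\<tau>!n"] unfolding xs_def by eventually_elim auto
    then have "(\<integral>\<omega>. max 0 (a - xs \<omega> n) \<partial>M) \<le> (\<integral>\<omega>. max 0 a \<partial>M)"
      by (intro integral_mono_AE mint) auto
    also have "\<dots> = max 0 a" by (simp add: prob_space)
    finally show ?thesis .
  qed
  have pw: "(b - a) * real N * indicator C \<omega> \<le> ugain a b (xs \<omega>) n + max 0 (a - xs \<omega> n)"
    if "\<omega> \<in> space M" for \<omega>
  proof -
    have ui: "(b-a) * real (ucnt a b (xs \<omega>) n) \<le> ugain a b (xs \<omega>) n + max 0 (a - xs \<omega> n)"
      by (rule upcross_ineq[OF ab])
    show ?thesis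
    proof (cases "\<omega> \<in> C")
      case True
      then obtain l where "is_chain (\<lambda>s. cx Y s \<omega>) (set \<tau>) a b N l" by (auto simp: C_def)
      from chain_ucnt[OF ab tau(1) this] have "N \<le> ucnt a b (xs \<omega>) n"
        by (simp add: xs_def n_def)
      then have "(b-a) * real N \<le> (b-a) * real (ucnt a b (xs \<omega>) n)"
        using ab by (intro mult_left_mono) auto
      then show ?thesis using True ui by simp
    next
      case False
      have "0 \<le> (b-a) * real (ucnt a b (xs \<omega>) n)" using ab by simp
      then show ?thesis using False ui by simp
    qed
  qed
  have "(b - a) * real N * prob C = (\<integral>\<omega>. (b - a) * real N * indicator C \<omega> \<partial>M)"
    using Cs by simp
  also have "\<dots> \<le> (\<integral>\<omega>. ugain a b (xs \<omega>) n + max 0 (a - xs \<omega> n) \<partial>M)"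
  proof (rule integral_mono)
    have "integrable M (\<lambda>\<omega>. indicator C \<omega> *\<^sub>R (1::real))"
      by (rule Bochner_Integration.integrable_indicator[OF Cs]) (simp add: less_top[symmetric])
    then have "integrable M (indicator C :: 'a \<Rightarrow> real)" by simp
    then show "integrable M (\<lambda>\<omega>. (b - a) * real N * indicator C \<omega>)"
      by simp
    show "integrable M (\<lambda>\<omega>. ugain a b (xs \<omega>) n + max 0 (a - xs \<omega> n))"
      using ugint mint by (rule Bochner_Integration.integrable_add)
    show "\<And>\<omega>. \<omega> \<in> space M \<Longrightarrow> (b - a) * real N * indicator C \<omega> \<le> ugain a b (xs \<omega>) n + max 0 (a - xs \<omega> n)"
      by (rule pw)
  qed
  also have "\<dots> = (\<integral>\<omega>. ugain a b (xs \<omega>) n \<partial>M) + (\<integral>\<omega>. max 0 (a - xs \<omega> n) \<partial>M)"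
    using ugint mint by simp
  also have "\<dots> \<le> max 0 a" using ug0 mle by simp
  finally have "(b - a) * (real N * prob C) \<le> max 0 a" by (simp add: mult.assoc)
  then show ?thesis using ab unfolding C_def[symmetric] by (simp add: pos_le_divide_eq mult.commute)
qed

end


lemma is_chain_mono: "is_chain f G a b N l \<Longrightarrow> G \<subseteq> H \<Longrightarrow> is_chain f H a b N l"
  by (auto simp: is_chain_def)

lemma finite_subset_incseq:
  fixes e :: "nat \<Rightarrow> real"
  assumes "set l \<subseteq> range e"
  shows "\<exists>m. set l \<subseteq> e ` {..m}"
  using assms
proof (induction l)
  case Nil
  then show ?case by simp
next
  case (Cons x l)
  then obtain m where m: "set l \<subseteq> e ` {..m}" by auto
  obtain k where k: "x = e k" using Cons.prems by auto
  have "set (x # l) \<subseteq> e ` {..max m k}" using m k by auto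
  then show ?case by blast
qed

context filt
begin

lemma ae_nochain:
  assumes D: "countable D" "D \<subseteq> {0..}" and ab: "a < b"
    and Y: "integrable M Y" "AE \<omega> in M. 0 \<le> Y \<omega>"
  shows "AE \<omega> in M. \<exists>N. \<forall>l. \<not> is_chain (\<lambda>s. cx Y s \<omega>) D a b N l"
proof (cases "D = {}")
  case True
  have "\<not> is_chain f D a b 1 l" for f l
    using True by (cases l) (auto simp: is_chain_def)
  then show ?thesis by auto
next
  case False
  define e where "e = from_nat_into D"
  have rng: "range e = D" unfolding e_def using False D(1) by (rule range_from_nat_into)
  define Dm where "Dm m = e ` {..m}" for m
  have Dm_fin: "finite (Dm m)" for m by (simp add: Dm_def)
  have Dm_sub: "Dm m \<subseteq> D" for m using rng by (auto simp: Dm_def)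
  have Dm_ne: "Dm m \<noteq> {}" for m by (simp add: Dm_def)
  have Dm_mono: "m \<le> m' \<Longrightarrow> Dm m \<subseteq> Dm m'" for m m' by (auto simp: Dm_def)
  define C where "C N m = {\<omega>\<in>space M. \<exists>l. is_chain (\<lambda>s. cx Y s \<omega>) (Dm m) a b N l}" for N m
  have Cs: "C N m \<in> sets M" for N m unfolding C_def by (rule chain_pred[OF Dm_fin])
  have Csub: "C N m \<subseteq> C N m'" if "m \<le> m'" for N m m'
    using Dm_mono[OF that] by (auto simp: C_def intro: is_chain_mono)
  have Cinc: "incseq (C N)" for N
    by (rule monoI) (rule Csub)
  define K where "K = max 0 a / (b - a)"
  have Cb: "real N * prob (C N m) \<le> K" for N m
  proof -
    define \<tau> where "\<tau> = sorted_list_of_set (Dm m)"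
    have st: "set \<tau> = Dm m" using Dm_fin by (simp add: \<tau>_def)
    have "real N * prob {\<omega>\<in>space M. \<exists>l. is_chain (\<lambda>s. cx Y s \<omega>) (set \<tau>) a b N l} \<le> max 0 a / (b - a)"
    proof (rule upcross_bound[OF _ _ _ ab Y])
      show "sorted_wrt (<) \<tau>" by (simp add: \<tau>_def)
      show "\<tau> \<noteq> []"
      proof
        assume "\<tau> = []"
        then have "Dm m = {}" using st by simp
        then show False using Dm_ne[of m] by simp
      qed
      show "\<forall>s\<in>set \<tau>. 0 \<le> s" using st Dm_sub D(2) by auto
    qed
    then show ?thesis unfolding st C_def K_def .
  qed
  define E where "E N = (\<Union>m. C N m)" for N
  have Es: "E N \<in> sets M" for N unfolding E_def using Cs by auto
  have Eb: "real N * prob (E N) \<le> K" for N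
  proof -
    have "(\<lambda>m. prob (C N m)) \<longlonglongrightarrow> prob (\<Union>m. C N m)"
      by (rule finite_Lim_measure_incseq) (use Cs Cinc in auto)
    then have "(\<lambda>m. real N * prob (C N m)) \<longlonglongrightarrow> real N * prob (E N)"
      unfolding E_def by (intro tendsto_mult tendsto_const)
    then show ?thesis using Cb by (intro LIMSEQ_le_const2) auto
  qed
  define B where "B = (\<Inter>N. E N)"
  have Bs: "B \<in> sets M" unfolding B_def using Es by auto
  have Bz: "prob B = 0"
  proof (rule ccontr)
    assume "prob B \<noteq> 0"
    then have pos: "prob B > 0" using measure_nonneg[of M B] by linarith
    obtain N :: nat where N: "K / prob B < real N" using reals_Archimedean2 by blast
    have "prob B \<le> prob (E N)" unfolding B_def by (rule finite_measure_mono) (use Es in auto)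
    then have "real N * prob B \<le> real N * prob (E N)" by (intro mult_left_mono) auto
    also have "\<dots> \<le> K" by (rule Eb)
    finally have "real N * prob B \<le> K" .
    moreover have "K < real N * prob B" using N pos by (simp add: divide_less_eq)
    ultimately show False by simp
  qed
  show ?thesis
  proof (rule AE_I[OF _ _ Bs])
    show "emeasure M B = 0" using Bz Bs by (simp add: emeasure_eq_measure)
    show "{\<omega> \<in> space M. \<not> (\<exists>N. \<forall>l. \<not> is_chain (\<lambda>s. cx Y s \<omega>) D a b N l)} \<subseteq> B"
    proof
      fix \<omega> assume w: "\<omega> \<in> {\<omega> \<in> space M. \<not> (\<exists>N. \<forall>l. \<not> is_chain (\<lambda>s. cx Y s \<omega>) D a b N l)}"
      show "\<omega> \<in> B" unfolding B_def
      proof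
        fix N
        from w obtain l where l: "is_chain (\<lambda>s. cx Y s \<omega>) D a b N l" by auto
        then have "set l \<subseteq> range e" using rng by (auto simp: is_chain_def)
        then obtain m where "set l \<subseteq> Dm m" unfolding Dm_def using finite_subset_incseq by blast
        then have "is_chain (\<lambda>s. cx Y s \<omega>) (Dm m) a b N l" using l by (auto simp: is_chain_def)
        then have "\<omega> \<in> C N m" using w by (auto simp: C_def)
        then show "\<omega> \<in> E N" by (auto simp: E_def)
      qed
    qed
  qed
qed

lemma ae_nochain_all:
  assumes D: "countable D" "D \<subseteq> {0..}"
    and Y: "integrable M Y" "AE \<omega> in M. 0 \<le> Y \<omega>"
  shows "AE \<omega> in M. \<forall>a\<in>\<rat>. \<forall>b\<in>\<rat>. a < b \<longrightarrow> (\<exists>N. \<forall>l. \<not> is_chain (\<lambda>s. cx Y s \<omega>) D a b N l)"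
proof -
  have "\<forall>a\<in>\<rat>. AE \<omega> in M. \<forall>b\<in>\<rat>. a < b \<longrightarrow> (\<exists>N. \<forall>l. \<not> is_chain (\<lambda>s. cx Y s \<omega>) D a b N l)"
  proof
    fix a :: real assume "a \<in> \<rat>"
    have "\<forall>b\<in>\<rat>. AE \<omega> in M. a < b \<longrightarrow> (\<exists>N. \<forall>l. \<not> is_chain (\<lambda>s. cx Y s \<omega>) D a b N l)"
    proof
      fix b :: real assume "b \<in> \<rat>"
      show "AE \<omega> in M. a < b \<longrightarrow> (\<exists>N. \<forall>l. \<not> is_chain (\<lambda>s. cx Y s \<omega>) D a b N l)"
      proof (cases "a < b")
        case True
        show ?thesis using ae_nochain[OF D True Y] by auto
      next
        case False
        then show ?thesis by auto
      qed
    qed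
    then show "AE \<omega> in M. \<forall>b\<in>\<rat>. a < b \<longrightarrow> (\<exists>N. \<forall>l. \<not> is_chain (\<lambda>s. cx Y s \<omega>) D a b N l)"
      by (subst AE_ball_countable) (auto simp: countable_rat)
  qed
  then show ?thesis by (subst AE_ball_countable) (auto simp: countable_rat)
qed

end


lemma freq_at:
  fixes t :: real
  assumes "\<not> eventually P (at t within T)"
  shows "\<forall>d>0. \<exists>x\<in>T. x \<noteq> t \<and> dist x t < d \<and> \<not> P x"
  using assms unfolding eventually_at by auto

lemma lim_exists_gen:
  fixes \<phi> :: "real \<Rightarrow> real" and t :: real
  assumes nb: "at t within T \<noteq> bot"
    and bd: "eventually (\<lambda>s. 0 \<le> \<phi> s \<and> \<phi> s \<le> B) (at t within T)"
    and osc: "\<And>a b. a \<in> \<rat> \<Longrightarrow> b \<in> \<rat> \<Longrightarrow> a < b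
       \<Longrightarrow> (\<forall>d>0. \<exists>x\<in>T. x \<noteq> t \<and> dist x t < d \<and> \<phi> x \<le> a)
       \<Longrightarrow> (\<forall>d>0. \<exists>x\<in>T. x \<noteq> t \<and> dist x t < d \<and> b \<le> \<phi> x) \<Longrightarrow> False"
  shows "\<exists>l. (\<phi> \<longlongrightarrow> l) (at t within T)"
proof -
  let ?G = "at t within T"
  define f where "f s = ereal (\<phi> s)" for s
  define L where "L = Liminf ?G f"
  define S where "S = Limsup ?G f"
  have L0: "0 \<le> L" unfolding L_def
    by (rule Liminf_bounded) (use bd in \<open>auto simp: f_def elim!: eventually_mono\<close>)
  have SB: "S \<le> ereal B" unfolding S_def
    by (rule Limsup_bounded) (use bd in \<open>auto simp: f_def elim!: eventually_mono\<close>)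
  have LS: "L \<le> S" unfolding L_def S_def by (rule Liminf_le_Limsup[OF nb])
  show ?thesis
  proof (cases "L = S")
    case True
    obtain l where l: "L = ereal l" using L0 SB LS True by (cases L) auto
    have "(f \<longlongrightarrow> L) ?G"
      by (rule Liminf_eq_Limsup[OF nb]) (use True in \<open>auto simp: L_def S_def\<close>)
    then have "(\<phi> \<longlongrightarrow> l) ?G" unfolding l f_def by (simp add: lim_ereal)
    then show ?thesis by blast
  next
    case False
    then have LS': "L < S" using LS by simp
    obtain z1 where z1: "L < ereal z1" "ereal z1 < S" using ereal_dense2[OF LS'] by blast
    obtain z2 where z2: "ereal z1 < ereal z2" "ereal z2 < S" using ereal_dense2[OF z1(2)] by blast
    have "z1 < z2" using z2(1) by simp
    obtain a where a: "a \<in> \<rat>" "z1 < a" "a < z2" using Rats_dense_in_real[OF \<open>z1 < z2\<close>] by blast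
    obtain b where b: "b \<in> \<rat>" "a < b" "b < z2" using Rats_dense_in_real[OF a(3)] by blast
    have La: "L < ereal a" using z1(1) a(2) by (simp add: order_less_le_trans less_imp_le)
    have "ereal b < ereal z2" using b(3) by simp
    then have bS: "ereal b < S" using z2(2) by (rule order.strict_trans)
    have lo: "\<forall>d>0. \<exists>x\<in>T. x \<noteq> t \<and> dist x t < d \<and> \<phi> x \<le> a"
    proof -
      have "\<not> (ereal a \<le> L)" using La by simp
      then obtain y where y: "y < ereal a" "\<not> eventually (\<lambda>x. y < f x) ?G"
        unfolding L_def le_Liminf_iff by auto
      have "\<forall>d>0. \<exists>x\<in>T. x \<noteq> t \<and> dist x t < d \<and> \<not> y < f x" by (rule freq_at[OF y(2)])
      moreover have "\<not> y < f x \<Longrightarrow> \<phi> x \<le> a" for x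
        using y(1) unfolding f_def by (metis ereal_less_eq(3) linorder_not_less order.strict_trans1 order_less_imp_le)
      ultimately show ?thesis by blast
    qed
    have hi: "\<forall>d>0. \<exists>x\<in>T. x \<noteq> t \<and> dist x t < d \<and> b \<le> \<phi> x"
    proof -
      have "\<not> (S \<le> ereal b)" using bS by simp
      then obtain y where y: "ereal b < y" "\<not> eventually (\<lambda>x. f x < y) ?G"
        unfolding S_def Limsup_le_iff by auto
      have "\<forall>d>0. \<exists>x\<in>T. x \<noteq> t \<and> dist x t < d \<and> \<not> f x < y" by (rule freq_at[OF y(2)])
      moreover have "\<not> f x < y \<Longrightarrow> b \<le> \<phi> x" for x
        using y(1) unfolding f_def by (metis ereal_less_eq(3) linorder_not_less order.strict_trans2 order_less_imp_le)
      ultimately show ?thesis by blast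
    qed
    show ?thesis using osc[OF a(1) b(1) b(2) lo hi] by simp
  qed
qed

lemma right_lim:
  fixes \<phi> :: "real \<Rightarrow> real" and t :: real
  assumes NC: "\<forall>a\<in>\<rat>. \<forall>b\<in>\<rat>. a < b \<longrightarrow> (\<exists>N. \<forall>l. \<not> is_chain \<phi> D a b N l)"
    and nb: "at t within (D \<inter> {t<..}) \<noteq> bot"
    and bd: "eventually (\<lambda>s. 0 \<le> \<phi> s \<and> \<phi> s \<le> B) (at t within (D \<inter> {t<..}))"
  shows "\<exists>l. (\<phi> \<longlongrightarrow> l) (at t within (D \<inter> {t<..}))"
proof (rule lim_exists_gen[OF nb bd])
  fix a b :: real
  assume ab: "a \<in> \<rat>" "b \<in> \<rat>" "a < b"
    and lo: "\<forall>d>0. \<exists>x\<in>D \<inter> {t<..}. x \<noteq> t \<and> dist x t < d \<and> \<phi> x \<le> a"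
    and hi: "\<forall>d>0. \<exists>x\<in>D \<inter> {t<..}. x \<noteq> t \<and> dist x t < d \<and> b \<le> \<phi> x"
  have lo': "\<exists>q\<in>D. t < q \<and> q < u \<and> \<phi> q \<le> a" if "t < u" for u
  proof -
    have "u - t > 0" using that by simp
    from lo[rule_format, OF this] obtain x where "x \<in> D \<inter> {t<..}" "dist x t < u - t" "\<phi> x \<le> a" by blast
    then show ?thesis by (auto simp: dist_real_def)
  qed
  have hi': "\<exists>p\<in>D. t < p \<and> p < u \<and> b \<le> \<phi> p" if "t < u" for u
  proof -
    have "u - t > 0" using that by simp
    from hi[rule_format, OF this] obtain x where "x \<in> D \<inter> {t<..}" "dist x t < u - t" "b \<le> \<phi> x" by blast
    then show ?thesis by (auto simp: dist_real_def)
  qed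
  have chains: "\<forall>u>t. \<exists>l. is_chain \<phi> D a b N l \<and> set l \<subseteq> {t<..<u}" for N
  proof (induction N)
    case 0
    show ?case by (auto simp: is_chain_def)
  next
    case (Suc N)
    show ?case
    proof (intro allI impI)
      fix u assume u: "t < u"
      obtain p where p: "p \<in> D" "t < p" "p < u" "b \<le> \<phi> p" using hi'[OF u] by blast
      obtain q where q: "q \<in> D" "t < q" "q < p" "\<phi> q \<le> a" using lo'[OF p(2)] by blast
      obtain l where l: "is_chain \<phi> D a b N l" "set l \<subseteq> {t<..<q}" using Suc.IH q(2) by blast
      have len: "length l = 2*N" using l(1) by (simp add: is_chain_def)
      have "is_chain \<phi> D a b (Suc N) (l @ [q, p])"
        unfolding is_chain_def
      proof (intro conjI allI impI)
        show "length (l @ [q, p]) = 2 * Suc N" using len by simp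
        show "sorted_wrt (<) (l @ [q, p])"
          using l q by (auto simp: sorted_wrt_append is_chain_def)
        show "set (l @ [q, p]) \<subseteq> D" using l p q by (auto simp: is_chain_def)
        fix i assume i: "i < Suc N"
        show "\<phi> ((l @ [q, p]) ! (2 * i)) \<le> a"
        proof (cases "i < N")
          case True
          then show ?thesis using l(1) len by (simp add: nth_append is_chain_def)
        next
          case False
          then have "i = N" using i by simp
          then show ?thesis using q len by (simp add: nth_append)
        qed
        show "b \<le> \<phi> ((l @ [q, p]) ! (2 * i + 1))"
        proof (cases "i < N")
          case True
          then show ?thesis using l(1) len by (simp add: nth_append is_chain_def)
        next
          case False
          then have "i = N" using i by simp
          then show ?thesis using p len by (simp add: nth_append)
        qed
      qed
      moreover have "set (l @ [q, p]) \<subseteq> {t<..<u}" using l p q by auto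
      ultimately show "\<exists>l. is_chain \<phi> D a b (Suc N) l \<and> set l \<subseteq> {t<..<u}" by blast
    qed
  qed
  obtain N where N: "\<forall>l. \<not> is_chain \<phi> D a b N l" using NC ab by blast
  have "t < t + 1" by simp
  from chains[of N, rule_format, OF this] obtain l where "is_chain \<phi> D a b N l" by blast
  then show False using N by blast
qed

lemma left_lim:
  fixes \<phi> :: "real \<Rightarrow> real" and t :: real
  assumes NC: "\<forall>a\<in>\<rat>. \<forall>b\<in>\<rat>. a < b \<longrightarrow> (\<exists>N. \<forall>l. \<not> is_chain \<phi> D a b N l)"
    and nb: "at t within (D \<inter> {..<t}) \<noteq> bot"
    and bd: "eventually (\<lambda>s. 0 \<le> \<phi> s \<and> \<phi> s \<le> B) (at t within (D \<inter> {..<t}))"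
  shows "\<exists>l. (\<phi> \<longlongrightarrow> l) (at t within (D \<inter> {..<t}))"
proof (rule lim_exists_gen[OF nb bd])
  fix a b :: real
  assume ab: "a \<in> \<rat>" "b \<in> \<rat>" "a < b"
    and lo: "\<forall>d>0. \<exists>x\<in>D \<inter> {..<t}. x \<noteq> t \<and> dist x t < d \<and> \<phi> x \<le> a"
    and hi: "\<forall>d>0. \<exists>x\<in>D \<inter> {..<t}. x \<noteq> t \<and> dist x t < d \<and> b \<le> \<phi> x"
  have lo': "\<exists>q\<in>D. u < q \<and> q < t \<and> \<phi> q \<le> a" if "u < t" for u
  proof -
    have "t - u > 0" using that by simp
    from lo[rule_format, OF this] obtain x where "x \<in> D \<inter> {..<t}" "dist x t < t - u" "\<phi> x \<le> a" by blast
    then show ?thesis by (auto simp: dist_real_def)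
  qed
  have hi': "\<exists>p\<in>D. u < p \<and> p < t \<and> b \<le> \<phi> p" if "u < t" for u
  proof -
    have "t - u > 0" using that by simp
    from hi[rule_format, OF this] obtain x where "x \<in> D \<inter> {..<t}" "dist x t < t - u" "b \<le> \<phi> x" by blast
    then show ?thesis by (auto simp: dist_real_def)
  qed
  have chains: "\<forall>u<t. \<exists>l. is_chain \<phi> D a b N l \<and> set l \<subseteq> {u<..<t}" for N
  proof (induction N)
    case 0
    show ?case by (auto simp: is_chain_def)
  next
    case (Suc N)
    show ?case
    proof (intro allI impI)
      fix u assume u: "u < t"
      obtain q where q: "q \<in> D" "u < q" "q < t" "\<phi> q \<le> a" using lo'[OF u] by blast
      obtain p where p: "p \<in> D" "q < p" "p < t" "b \<le> \<phi> p" using hi'[OF q(3)] by blast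
      obtain l where l: "is_chain \<phi> D a b N l" "set l \<subseteq> {p<..<t}" using Suc.IH p(3) by blast
      have len: "length l = 2*N" using l(1) by (simp add: is_chain_def)
      have "is_chain \<phi> D a b (Suc N) (q # p # l)"
        unfolding is_chain_def
      proof (intro conjI allI impI)
        show "length (q # p # l) = 2 * Suc N" using len by simp
        show "sorted_wrt (<) (q # p # l)"
          using l q p by (auto simp: is_chain_def)
        show "set (q # p # l) \<subseteq> D" using l p q by (auto simp: is_chain_def)
        fix i assume i: "i < Suc N"
        show "\<phi> ((q # p # l) ! (2 * i)) \<le> a"
        proof (cases i)
          case 0
          then show ?thesis using q by simp
        next
          case (Suc j)
          then have "(q # p # l) ! (2 * i) = l ! (2 * j)" by simp
          then show ?thesis using l(1) i Suc by (simp add: is_chain_def)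
        qed
        show "b \<le> \<phi> ((q # p # l) ! (2 * i + 1))"
        proof (cases i)
          case 0
          then show ?thesis using p by simp
        next
          case (Suc j)
          then have "(q # p # l) ! (2 * i + 1) = l ! (2 * j + 1)" by simp
          then show ?thesis using l(1) i Suc by (simp add: is_chain_def)
        qed
      qed
      moreover have "set (q # p # l) \<subseteq> {u<..<t}" using l p q by auto
      ultimately show "\<exists>l. is_chain \<phi> D a b (Suc N) l \<and> set l \<subseteq> {u<..<t}" by blast
    qed
  qed
  obtain N where N: "\<forall>l. \<not> is_chain \<phi> D a b N l" using NC ab by blast
  have "t - 1 < t" by simp
  from chains[of N, rule_format, OF this] obtain l where "is_chain \<phi> D a b N l" by blast
  then show False using N by blast
qed


lemma lim_dist_bound:
  fixes \<phi> :: "real \<Rightarrow> real"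
  assumes "(\<phi> \<longlongrightarrow> L) F" "F \<noteq> bot" "eventually (\<lambda>s. dist (\<phi> s) c < e) F"
  shows "dist L c \<le> e"
proof (rule tendsto_upperbound)
  show "((\<lambda>s. dist (\<phi> s) c) \<longlongrightarrow> dist L c) F" using assms(1) by (intro tendsto_intros)
  show "eventually (\<lambda>s. dist (\<phi> s) c \<le> e) F" using assms(3) by (auto elim: eventually_mono)
  show "F \<noteq> bot" by (rule assms(2))
qed

locale regD =
  fixes D :: "real set" and t0 :: real
  assumes dense: "\<And>x y. 0 \<le> x \<Longrightarrow> x < y \<Longrightarrow> y \<le> t0 \<Longrightarrow> \<exists>q\<in>D. x < q \<and> q < y"
begin

lemma nb_right: "0 \<le> u \<Longrightarrow> u < t0 \<Longrightarrow> at u within (D \<inter> {u<..}) \<noteq> bot"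
  unfolding trivial_limit_within islimpt_approachable_real not_not
proof (intro allI impI)
  fix e :: real assume u: "0 \<le> u" "u < t0" and e: "0 < e"
  obtain q where q: "q \<in> D" "u < q" "q < min (u + e) t0"
    using dense[of u "min (u + e) t0"] u e by auto
  then show "\<exists>x'\<in>D \<inter> {u<..}. x' \<noteq> u \<and> \<bar>x' - u\<bar> < e" by (intro bexI[of _ q]) auto
qed

lemma nb_left: "0 < u \<Longrightarrow> u \<le> t0 \<Longrightarrow> at u within (D \<inter> {..<u}) \<noteq> bot"
  unfolding trivial_limit_within islimpt_approachable_real not_not
proof (intro allI impI)
  fix e :: real assume u: "0 < u" "u \<le> t0" and e: "0 < e"
  obtain q where q: "q \<in> D" "max 0 (u - e) < q" "q < u"
    using dense[of "max 0 (u - e)" u] u e by auto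
  then show "\<exists>x'\<in>D \<inter> {..<u}. x' \<noteq> u \<and> \<bar>x' - u\<bar> < e" by (intro bexI[of _ q]) auto
qed

lemma reg_right_cont:
  fixes \<phi> g :: "real \<Rightarrow> real"
  assumes rlim: "\<And>t. 0 \<le> t \<Longrightarrow> t < t0 \<Longrightarrow> (\<phi> \<longlongrightarrow> g t) (at t within (D \<inter> {t<..}))"
    and t: "0 \<le> t" "t < t0"
  shows "(g \<longlongrightarrow> g t) (at_right t)"
  unfolding tendsto_iff
proof (intro allI impI)
  fix e :: real assume e: "0 < e"
  have "eventually (\<lambda>s. dist (\<phi> s) (g t) < e/2) (at t within (D \<inter> {t<..}))"
    by (rule tendsto_iff[THEN iffD1, OF rlim[OF t], rule_format]) (use e in simp)
  then obtain d where d: "d > 0" "\<And>s. s \<in> D \<inter> {t<..} \<Longrightarrow> s \<noteq> t \<Longrightarrow> dist s t < d \<Longrightarrow> dist (\<phi> s) (g t) < e/2"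
    unfolding eventually_at by blast
  have "\<forall>u>t. u < min (t + d) t0 \<longrightarrow> dist (g u) (g t) < e"
  proof (intro allI impI)
    fix u assume u: "t < u" "u < min (t + d) t0"
    have u0: "0 \<le> u" "u < t0" using u t by auto
    have ev: "eventually (\<lambda>s. dist (\<phi> s) (g t) < e/2) (at u within (D \<inter> {u<..}))"
      unfolding eventually_at
    proof (intro exI[of _ "t + d - u"] conjI ballI impI)
      show "0 < t + d - u" using u by simp
      fix s assume s: "s \<in> D \<inter> {u<..}" "s \<noteq> u \<and> dist s u < t + d - u"
      then have "s \<in> D \<inter> {t<..}" "s \<noteq> t" "dist s t < d" using u by (auto simp: dist_real_def)
      then show "dist (\<phi> s) (g t) < e/2" by (rule d(2))
    qed
    have "dist (g u) (g t) \<le> e/2" by (rule lim_dist_bound[OF rlim[OF u0] nb_right[OF u0] ev])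
    then show "dist (g u) (g t) < e" using e by simp
  qed
  moreover have "t < min (t + d) t0" using d t by simp
  ultimately show "eventually (\<lambda>u. dist (g u) (g t) < e) (at_right t)"
    unfolding eventually_at_right_field by blast
qed

lemma reg_left_lim:
  fixes \<phi> g h :: "real \<Rightarrow> real"
  assumes rlim: "\<And>t. 0 \<le> t \<Longrightarrow> t < t0 \<Longrightarrow> (\<phi> \<longlongrightarrow> g t) (at t within (D \<inter> {t<..}))"
    and llim: "(\<phi> \<longlongrightarrow> L) (at t within (D \<inter> {..<t}))"
    and t: "0 < t" "t \<le> t0"
  shows "(g \<longlongrightarrow> L) (at_left t)"
  unfolding tendsto_iff
proof (intro allI impI)
  fix e :: real assume e: "0 < e"
  have "eventually (\<lambda>s. dist (\<phi> s) L < e/2) (at t within (D \<inter> {..<t}))"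
    by (rule tendsto_iff[THEN iffD1, OF llim, rule_format]) (use e in simp)
  then obtain d where d: "d > 0" "\<And>s. s \<in> D \<inter> {..<t} \<Longrightarrow> s \<noteq> t \<Longrightarrow> dist s t < d \<Longrightarrow> dist (\<phi> s) L < e/2"
    unfolding eventually_at by blast
  have "\<forall>u>max 0 (t - d). u < t \<longrightarrow> dist (g u) L < e"
  proof (intro allI impI)
    fix u assume u: "max 0 (t - d) < u" "u < t"
    have u0: "0 \<le> u" "u < t0" using u t by auto
    have ev: "eventually (\<lambda>s. dist (\<phi> s) L < e/2) (at u within (D \<inter> {u<..}))"
      unfolding eventually_at
    proof (intro exI[of _ "t - u"] conjI ballI impI)
      show "0 < t - u" using u by simp
      fix s assume s: "s \<in> D \<inter> {u<..}" "s \<noteq> u \<and> dist s u < t - u"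
      then have "s \<in> D \<inter> {..<t}" "s \<noteq> t" "dist s t < d" using u by (auto simp: dist_real_def)
      then show "dist (\<phi> s) L < e/2" by (rule d(2))
    qed
    have "dist (g u) L \<le> e/2" by (rule lim_dist_bound[OF rlim[OF u0] nb_right[OF u0] ev])
    then show "dist (g u) L < e" using e by simp
  qed
  moreover have "max 0 (t - d) < t" using d t by simp
  ultimately show "eventually (\<lambda>u. dist (g u) L < e) (at_left t)"
    unfolding eventually_at_left_field by blast
qed

end


context filt
begin

lemma ident_meas_F: "t \<ge> 0 \<Longrightarrow> (\<lambda>x. x) \<in> M \<rightarrow>\<^sub>M F t"
proof -
  assume t: "t \<ge> 0"
  show ?thesis
    unfolding measurable_def
  proof (intro CollectI conjI ballI)
    show "(\<lambda>x. x) \<in> space M \<rightarrow> space (F t)" using spaceF[OF t] by simp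
    fix A assume A: "A \<in> sets (F t)"
    then have "A \<subseteq> space M" using sets.sets_into_space[OF A] spaceF[OF t] by simp
    then have "(\<lambda>x. x) -` A \<inter> space M = A" by auto
    then show "(\<lambda>x. x) -` A \<inter> space M \<in> sets M" using setsF[OF t] A by auto
  qed
qed

lemma prog_adapted:
  assumes "prog_measurable M F X" "t \<ge> 0"
  shows "X t \<in> borel_measurable (F t)"
proof -
  have m: "(\<lambda>(s,\<omega>). X s \<omega>) \<in> borel_measurable (restrict_space borel {0..t} \<Otimes>\<^sub>M F t)"
    using assms unfolding prog_measurable_def by blast
  have p: "(\<lambda>\<omega>. (t, \<omega>)) \<in> F t \<rightarrow>\<^sub>M restrict_space borel {0..t} \<Otimes>\<^sub>M F t"
  proof (rule measurable_Pair)
    show "(\<lambda>\<omega>. t) \<in> F t \<rightarrow>\<^sub>M restrict_space borel {0..t}"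
      using assms(2) by (intro measurable_const) (simp add: space_restrict_space)
    show "(\<lambda>\<omega>. \<omega>) \<in> F t \<rightarrow>\<^sub>M F t" by simp
  qed
  have "(\<lambda>\<omega>. (\<lambda>(s,\<omega>). X s \<omega>) (t, \<omega>)) \<in> borel_measurable (F t)"
    by (rule measurable_compose[OF p m])
  then show ?thesis by simp
qed

lemma prog_joint:
  assumes "prog_measurable M F X"
  shows "(\<lambda>(s,\<omega>). if 0 \<le> s then X s \<omega> else 0) \<in> borel_measurable (lborel \<Otimes>\<^sub>M M)"
proof -
  define Z where "Z n = (\<lambda>(s::real,\<omega>). if s \<in> {0..real n} then X (min (real n) (max 0 s)) \<omega> else 0)" for n :: nat
  have Zm: "Z n \<in> borel_measurable (borel \<Otimes>\<^sub>M M)" for n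
  proof -
    have m: "(\<lambda>(s,\<omega>). X s \<omega>) \<in> borel_measurable (restrict_space borel {0..real n} \<Otimes>\<^sub>M F (real n))"
      using assms unfolding prog_measurable_def by simp
    have c: "(\<lambda>s::real. min (real n) (max 0 s)) \<in> borel \<rightarrow>\<^sub>M restrict_space borel {0..real n}"
      by (rule measurable_restrict_space2) auto
    have p: "(\<lambda>(s,\<omega>). (min (real n) (max 0 s), \<omega>)) \<in> borel \<Otimes>\<^sub>M M \<rightarrow>\<^sub>M restrict_space borel {0..real n} \<Otimes>\<^sub>M F (real n)"
    proof -
      have "(\<lambda>p. (min (real n) (max 0 (fst p)), snd p)) \<in> borel \<Otimes>\<^sub>M M \<rightarrow>\<^sub>M restrict_space borel {0..real n} \<Otimes>\<^sub>M F (real n)"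
      proof (rule measurable_Pair)
        show "(\<lambda>p. min (real n) (max 0 (fst p))) \<in> borel \<Otimes>\<^sub>M M \<rightarrow>\<^sub>M restrict_space borel {0..real n}"
          by (rule measurable_compose[OF measurable_fst c])
        show "(\<lambda>p. snd p) \<in> borel \<Otimes>\<^sub>M M \<rightarrow>\<^sub>M F (real n)"
          by (rule measurable_compose[OF measurable_snd ident_meas_F]) simp
      qed
      then show ?thesis by (simp add: case_prod_beta')
    qed
    have comp: "(\<lambda>x. (\<lambda>(s,\<omega>). X s \<omega>) ((\<lambda>(s,\<omega>). (min (real n) (max 0 s), \<omega>)) x)) \<in> borel_measurable (borel \<Otimes>\<^sub>M M)"
      by (rule measurable_compose[OF p m])
    have comp': "(\<lambda>(s,\<omega>). X (min (real n) (max 0 s)) \<omega>) \<in> borel_measurable (borel \<Otimes>\<^sub>M M)"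
      using comp by (simp add: case_prod_beta')
    have S: "fst -` {0..real n} \<inter> space (borel \<Otimes>\<^sub>M M) \<in> sets (borel \<Otimes>\<^sub>M M)"
      by (rule measurable_sets[OF measurable_fst]) simp
    have "(\<lambda>x. if x \<in> fst -` {0..real n} then (\<lambda>(s,\<omega>). X (min (real n) (max 0 s)) \<omega>) x else 0) \<in> borel_measurable (borel \<Otimes>\<^sub>M M)"
      by (rule measurable_If_set[OF comp' measurable_const S]) simp
    moreover have "Z n = (\<lambda>x. if x \<in> fst -` {0..real n} then (\<lambda>(s,\<omega>). X (min (real n) (max 0 s)) \<omega>) x else 0)"
      unfolding Z_def
    proof (rule ext)
      fix x :: "real \<times> 'a"
      show "(case x of (s, \<omega>) \<Rightarrow> if s \<in> {0..real n} then X (min (real n) (max 0 s)) \<omega> else 0) =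
        (if x \<in> fst -` {0..real n} then (\<lambda>(s,\<omega>). X (min (real n) (max 0 s)) \<omega>) x else 0)"
        by (cases x) simp
    qed
    ultimately show ?thesis by (simp only:)
  qed
  have lim: "(\<lambda>n. Z n x) \<longlonglongrightarrow> (\<lambda>(s,\<omega>). if 0 \<le> s then X s \<omega> else 0) x" for x
  proof -
    obtain s \<omega> where x: "x = (s, \<omega>)" by (cases x)
    obtain N :: nat where N: "s < real N" using reals_Archimedean2 by blast
    have "\<forall>n\<ge>N. Z n x = (\<lambda>(s,\<omega>). if 0 \<le> s then X s \<omega> else 0) x"
    proof (intro allI impI)
      fix n assume "N \<le> n"
      then have "real N \<le> real n" by simp
      then have "s < real n" using N by linarith
      then show "Z n x = (\<lambda>(s,\<omega>). if 0 \<le> s then X s \<omega> else 0) x"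
        unfolding Z_def x by auto
    qed
    then have "eventually (\<lambda>n. Z n x = (\<lambda>(s,\<omega>). if 0 \<le> s then X s \<omega> else 0) x) sequentially"
      unfolding eventually_sequentially by blast
    then show ?thesis by (rule tendsto_eventually)
  qed
  have m1: "(\<lambda>(s,\<omega>). if 0 \<le> s then X s \<omega> else 0) \<in> borel_measurable (borel \<Otimes>\<^sub>M M)"
    by (rule borel_measurable_LIMSEQ_real[OF lim Zm])
  have e: "sets (lborel \<Otimes>\<^sub>M M) = sets (borel \<Otimes>\<^sub>M M)"
    by (rule sets_pair_measure_cong) simp_all
  have e2: "borel_measurable (lborel \<Otimes>\<^sub>M M) = borel_measurable (borel \<Otimes>\<^sub>M M)"
    by (rule measurable_cong_sets[OF e refl])
  show ?thesis by (subst e2) (rule m1)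
qed

end


lemma dyadic_up:
  fixes s :: real
  shows "s < (real_of_int \<lfloor>s * 2^n\<rfloor> + 1) / 2^n"
    and "(real_of_int \<lfloor>s * 2^n\<rfloor> + 1) / 2^n \<le> s + (1/2)^n"
proof -
  have p: "(0::real) < 2^n" by simp
  have f1: "s * 2^n < real_of_int \<lfloor>s * 2^n\<rfloor> + 1" by linarith
  have f2: "real_of_int \<lfloor>s * 2^n\<rfloor> \<le> s * 2^n" by linarith
  show "s < (real_of_int \<lfloor>s * 2^n\<rfloor> + 1) / 2^n" using f1 p by (simp add: less_divide_eq)
  have "(real_of_int \<lfloor>s * 2^n\<rfloor> + 1) / 2^n \<le> (s * 2^n + 1) / 2^n"
    using f2 p by (intro divide_right_mono) auto
  also have "\<dots> = s + (1/2)^n" using p by (simp add: field_simps power_one_over)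
  finally show "(real_of_int \<lfloor>s * 2^n\<rfloor> + 1) / 2^n \<le> s + (1/2)^n" .
qed

lemma dyadic_lim:
  fixes s :: real
  shows "(\<lambda>n. (real_of_int \<lfloor>s * 2^n\<rfloor> + 1) / 2^n) \<longlonglongrightarrow> s"
proof (rule tendsto_sandwich[of "\<lambda>n. s" _ _ "\<lambda>n. s + (1/2)^n"])
  show "eventually (\<lambda>n. s \<le> (real_of_int \<lfloor>s * 2^n\<rfloor> + 1) / 2^n) sequentially"
    by (rule always_eventually) (auto intro: less_imp_le dyadic_up(1))
  show "eventually (\<lambda>n. (real_of_int \<lfloor>s * 2^n\<rfloor> + 1) / 2^n \<le> s + (1/2)^n) sequentially"
    using dyadic_up(2) by auto
  show "(\<lambda>n. s) \<longlonglongrightarrow> s" by simp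
  have "(\<lambda>n. s + (1/2::real)^n) \<longlonglongrightarrow> s + 0"
    by (intro tendsto_add tendsto_const LIMSEQ_realpow_zero) auto
  then show "(\<lambda>n. s + (1/2::real)^n) \<longlonglongrightarrow> s" by simp
qed

context filt
begin

lemma cadlag_prog:
  assumes adapt: "\<And>t. t \<ge> 0 \<Longrightarrow> X t \<in> borel_measurable (F t)"
    and rc: "\<And>\<omega> t. \<omega> \<in> space M \<Longrightarrow> t \<ge> 0 \<Longrightarrow> continuous (at_right t) (\<lambda>s. X s \<omega>)"
  shows "prog_measurable M F X"
  unfolding prog_measurable_def
proof (intro allI impI)
  fix T :: real assume T: "T \<ge> 0"
  define P where "P = restrict_space borel {0..T} \<Otimes>\<^sub>M F T"
  define y where "y n s = (real_of_int \<lfloor>s * 2^n\<rfloor> + 1) / 2^n" for n :: nat and s :: real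
  define Xn where "Xn n = (\<lambda>p. X (min T (max 0 (y n (fst p)))) (snd p))" for n
  have Xn_m: "Xn n \<in> borel_measurable P" for n
  proof -
    have fk: "(\<lambda>p. X (min T (max 0 ((real_of_int k + 1) / 2^n))) (snd p)) \<in> borel_measurable P" for k :: int
    proof -
      define w where "w = min T (max 0 ((real_of_int k + 1) / (2::real)^n))"
      have w: "0 \<le> w" "w \<le> T" using T by (auto simp: w_def)
      have "X w \<in> borel_measurable (F T)" by (rule measF2[OF w adapt[OF w(1)]])
      then have "(\<lambda>p. X w (snd p)) \<in> borel_measurable P"
        unfolding P_def by (rule measurable_compose[OF measurable_snd])
      then show ?thesis by (simp add: w_def)
    qed
    have g1: "(\<lambda>s::real. s * 2^n) \<in> restrict_space borel {0..T} \<rightarrow>\<^sub>M borel"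
      by (rule measurable_restrict_space1) simp
    have g2: "(\<lambda>p. fst p * 2^n) \<in> P \<rightarrow>\<^sub>M borel"
      unfolding P_def by (rule measurable_compose[OF measurable_fst g1])
    have g: "(\<lambda>p. \<lfloor>fst p * 2^n\<rfloor>) \<in> P \<rightarrow>\<^sub>M count_space UNIV"
      by (rule measurable_compose[OF g2 measurable_real_floor])
    have "(\<lambda>p. (\<lambda>k p. X (min T (max 0 ((real_of_int k + 1) / 2^n))) (snd p)) (\<lfloor>fst p * 2^n\<rfloor>) p) \<in> borel_measurable P"
      by (rule measurable_compose_countable[OF fk g])
    then show ?thesis by (simp add: Xn_def y_def)
  qed
  have lim: "(\<lambda>n. Xn n p) \<longlonglongrightarrow> (\<lambda>(s,\<omega>). X s \<omega>) p" if p: "p \<in> space P" for p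
  proof -
    obtain s \<omega> where sw: "p = (s, \<omega>)" by (cases p)
    have s: "0 \<le> s" "s \<le> T" and w: "\<omega> \<in> space M"
      using p spaceF[OF T] by (auto simp: P_def sw space_pair_measure space_restrict_space)
    have ypos: "s < y n s" for n unfolding y_def by (rule dyadic_up(1))
    have ymax: "max 0 (y n s) = y n s" for n using ypos[of n] s by simp
    show ?thesis
    proof (cases "s = T")
      case True
      have "Xn n p = X s \<omega>" for n using ypos[of n] ymax[of n] True by (simp add: Xn_def sw)
      then show ?thesis by (simp add: sw)
    next
      case False
      then have sT: "s < T" using s by simp
      have vt: "(\<lambda>n. min T (y n s)) \<longlonglongrightarrow> min T s"
        unfolding y_def by (intro tendsto_min tendsto_const dyadic_lim)
      have "min T s = s" using sT by simp
      with vt have vt': "(\<lambda>n. min T (y n s)) \<longlonglongrightarrow> s" by simp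
      have fl: "filterlim (\<lambda>n. min T (y n s)) (at_right s) sequentially"
        unfolding filterlim_at
      proof
        show "eventually (\<lambda>n. min T (y n s) \<in> {s<..} \<and> min T (y n s) \<noteq> s) sequentially"
        proof (rule always_eventually, intro allI)
          fix n
          have "s < min T (y n s)" using ypos[of n] sT by simp
          then show "min T (y n s) \<in> {s<..} \<and> min T (y n s) \<noteq> s" by (simp del: min_less_iff_conj)
        qed
        show "(\<lambda>n. min T (y n s)) \<longlonglongrightarrow> s" by (rule vt')
      qed
      have cont: "((\<lambda>r. X r \<omega>) \<longlongrightarrow> X s \<omega>) (at_right s)"
        using rc[OF w s(1)] unfolding continuous_within by simp
      have "(\<lambda>n. X (min T (y n s)) \<omega>) \<longlonglongrightarrow> X s \<omega>"
        by (rule filterlim_compose[OF cont fl])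
      then show ?thesis by (simp add: Xn_def sw ymax)
    qed
  qed
  have "(\<lambda>(s,\<omega>). X s \<omega>) \<in> borel_measurable P"
    by (rule borel_measurable_LIMSEQ_real[OF lim Xn_m])
  then show "(\<lambda>(s,\<omega>). X s \<omega>) \<in> borel_measurable (restrict_space borel {0..T} \<Otimes>\<^sub>M F T)"
    by (simp add: P_def)
qed

end


lemma fatou_int:
  fixes f :: "nat \<Rightarrow> 'a \<Rightarrow> real" and g :: "'a \<Rightarrow> real"
  assumes fi: "\<And>n. integrable M (f n)" and gm: "g \<in> borel_measurable M"
    and pos: "AE x in M. \<forall>n. 0 \<le> f n x"
    and lim: "AE x in M. (\<lambda>n. f n x) \<longlonglongrightarrow> g x"
    and c: "\<And>n. (\<integral>x. f n x \<partial>M) = c"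
  shows "integrable M g \<and> (\<integral>x. g x \<partial>M) \<le> c"
proof -
  have gpos: "AE x in M. 0 \<le> g x"
    using pos lim by eventually_elim (auto intro: LIMSEQ_le_const)
  have c0: "0 \<le> c"
  proof -
    have "0 \<le> (\<integral>x. f 0 x \<partial>M)" using pos by (intro integral_nonneg_AE) auto
    then show ?thesis using c by simp
  qed
  have fm: "(\<lambda>x. ennreal (f n x)) \<in> borel_measurable M" for n
    using fi[of n] by (intro measurable_compose[OF _ measurable_ennreal]) auto
  have "(\<integral>\<^sup>+x. ennreal (g x) \<partial>M) = (\<integral>\<^sup>+x. liminf (\<lambda>n. ennreal (f n x)) \<partial>M)"
  proof (rule nn_integral_cong_AE)
    show "AE x in M. ennreal (g x) = liminf (\<lambda>n. ennreal (f n x))"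
      using lim
    proof eventually_elim
      case (elim x)
      then have "(\<lambda>n. ennreal (f n x)) \<longlonglongrightarrow> ennreal (g x)" by (rule tendsto_ennrealI)
      then show ?case by (intro lim_imp_Liminf[symmetric]) auto
    qed
  qed
  also have "\<dots> \<le> liminf (\<lambda>n. \<integral>\<^sup>+x. ennreal (f n x) \<partial>M)"
    by (rule nn_integral_liminf[OF fm])
  also have "(\<lambda>n. \<integral>\<^sup>+x. ennreal (f n x) \<partial>M) = (\<lambda>n. ennreal c)"
  proof
    fix n
    have "AE x in M. 0 \<le> f n x" using pos by eventually_elim auto
    then show "(\<integral>\<^sup>+x. ennreal (f n x) \<partial>M) = ennreal c"
      using nn_integral_eq_integral[OF fi] c by simp
  qed
  also have "liminf (\<lambda>n. ennreal c) = ennreal c" by (simp add: Liminf_const)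
  finally have le: "(\<integral>\<^sup>+x. ennreal (g x) \<partial>M) \<le> ennreal c" .
  have gi: "integrable M g"
  proof (rule integrableI_bounded[OF gm])
    have "(\<integral>\<^sup>+x. ennreal (norm (g x)) \<partial>M) = (\<integral>\<^sup>+x. ennreal (g x) \<partial>M)"
      by (rule nn_integral_cong_AE) (use gpos in \<open>auto elim!: eventually_mono\<close>)
    also have "\<dots> < \<infinity>" using le by (simp add: le_less_trans)
    finally show "(\<integral>\<^sup>+x. ennreal (norm (g x)) \<partial>M) < \<infinity>" .
  qed
  have "ennreal (\<integral>x. g x \<partial>M) \<le> ennreal c"
    using le nn_integral_eq_integral[OF gi gpos] by simp
  then have "(\<integral>x. g x \<partial>M) \<le> c" using c0 by (simp add: ennreal_le_iff)
  with gi show ?thesis by simp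
qed

lemma fubini_ae:
  fixes G1 G2 :: "real \<Rightarrow> 'a \<Rightarrow> ennreal"
  assumes sf: "sigma_finite_measure M"
    and m1: "(\<lambda>p. G1 (fst p) (snd p)) \<in> borel_measurable (lborel \<Otimes>\<^sub>M M)"
    and m2: "(\<lambda>p. G2 (fst p) (snd p)) \<in> borel_measurable (lborel \<Otimes>\<^sub>M M)"
    and ae: "\<And>s. s \<ge> t \<Longrightarrow> AE \<omega> in M. G1 s \<omega> = G2 s \<omega>"
  shows "AE \<omega> in M. (\<integral>\<^sup>+ s\<in>{t..}. G1 s \<omega> \<partial>lborel) = (\<integral>\<^sup>+ s\<in>{t..}. G2 s \<omega> \<partial>lborel)"
proof -
  interpret M: sigma_finite_measure M by (rule sf)
  interpret P: pair_sigma_finite lborel M by (intro pair_sigma_finite.intro sf) (rule lborel.sigma_finite_measure_axioms)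
  define f where "f s \<omega> = (if t \<le> s \<and> G1 s \<omega> \<noteq> G2 s \<omega> then 1 else 0 :: ennreal)" for s \<omega>
  have E: "{p \<in> space (lborel \<Otimes>\<^sub>M M). G1 (fst p) (snd p) = G2 (fst p) (snd p)} \<in> sets (lborel \<Otimes>\<^sub>M M)"
    by (rule borel_measurable_eq[OF m1 m2])
  have T: "{p \<in> space (lborel \<Otimes>\<^sub>M M). t \<le> fst p} \<in> sets (lborel \<Otimes>\<^sub>M M)"
  proof -
    have "fst -` {t..} \<inter> space (lborel \<Otimes>\<^sub>M M) \<in> sets (lborel \<Otimes>\<^sub>M M)"
      by (rule measurable_sets[OF measurable_fst]) simp
    moreover have "fst -` {t..} \<inter> space (lborel \<Otimes>\<^sub>M M) = {p \<in> space (lborel \<Otimes>\<^sub>M M). t \<le> fst p}"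
      by auto
    ultimately show ?thesis by simp
  qed
  define S where "S = {p \<in> space (lborel \<Otimes>\<^sub>M M). t \<le> fst p} -
        {p \<in> space (lborel \<Otimes>\<^sub>M M). G1 (fst p) (snd p) = G2 (fst p) (snd p)}"
  have Ss: "S \<in> sets (lborel \<Otimes>\<^sub>M M)" unfolding S_def using T E by (rule sets.Diff)
  have fm: "(\<lambda>(s, \<omega>). f s \<omega>) \<in> borel_measurable (lborel \<Otimes>\<^sub>M M)"
  proof -
    have "(indicator S :: real \<times> 'a \<Rightarrow> ennreal) \<in> borel_measurable (lborel \<Otimes>\<^sub>M M)"
      using Ss by simp
    moreover have "(\<lambda>(s, \<omega>). f s \<omega>) \<in> borel_measurable (lborel \<Otimes>\<^sub>M M) \<longleftrightarrow>
        (indicator S :: real \<times> 'a \<Rightarrow> ennreal) \<in> borel_measurable (lborel \<Otimes>\<^sub>M M)"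
    proof (rule measurable_cong)
      fix p :: "real \<times> 'a" assume "p \<in> space (lborel \<Otimes>\<^sub>M M)"
      then show "(\<lambda>(s, \<omega>). f s \<omega>) p = indicator S p"
        by (cases p) (auto simp: f_def S_def indicator_def)
    qed
    ultimately show ?thesis by simp
  qed
  have fs: "(\<integral>\<^sup>+ \<omega>. f s \<omega> \<partial>M) = 0" for s
  proof (cases "t \<le> s")
    case True
    have "AE \<omega> in M. f s \<omega> = 0" using ae[OF True] by eventually_elim (simp add: f_def)
    then have "(\<integral>\<^sup>+ \<omega>. f s \<omega> \<partial>M) = (\<integral>\<^sup>+ \<omega>. 0 \<partial>M)" by (rule nn_integral_cong_AE)
    then show ?thesis by simp
  next
    case False
    then show ?thesis by (simp add: f_def)
  qed
  have "(\<integral>\<^sup>+ \<omega>. (\<integral>\<^sup>+ s. f s \<omega> \<partial>lborel) \<partial>M) = (\<integral>\<^sup>+ s. (\<integral>\<^sup>+ \<omega>. f s \<omega> \<partial>M) \<partial>lborel)"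
    by (rule P.Fubini'[OF fm])
  also have "\<dots> = 0" using fs by simp
  finally have int0: "(\<integral>\<^sup>+ \<omega>. (\<integral>\<^sup>+ s. f s \<omega> \<partial>lborel) \<partial>M) = 0" .
  have fm': "(\<lambda>(\<omega>, s). f s \<omega>) \<in> borel_measurable (M \<Otimes>\<^sub>M lborel)"
    using fm by (subst measurable_pair_swap_iff) (simp add: case_prod_beta')
  have im: "(\<lambda>\<omega>. \<integral>\<^sup>+ s. f s \<omega> \<partial>lborel) \<in> borel_measurable M"
    by (rule lborel.borel_measurable_nn_integral[OF fm'])
  have ae0: "AE \<omega> in M. (\<integral>\<^sup>+ s. f s \<omega> \<partial>lborel) = 0"
    using int0 nn_integral_0_iff_AE[OF im] by simp
  show ?thesis
    using ae0 AE_space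
  proof eventually_elim
    case (elim \<omega>)
    have sec: "(\<lambda>s. f s \<omega>) \<in> borel_measurable lborel"
      using measurable_compose[OF measurable_Pair2'[OF elim(2)] fm] by simp
    have "AE s in lborel. f s \<omega> = 0" using elim(1) nn_integral_0_iff_AE[OF sec] by simp
    then have "AE s in lborel. G1 s \<omega> * indicator {t..} s = G2 s \<omega> * indicator {t..} s"
      by eventually_elim (auto simp: f_def indicator_def split: if_splits)
    then show ?case by (rule nn_integral_cong_AE)
  qed
qed


lemma nn_int_meas:
  fixes G H :: "real \<Rightarrow> 'a \<Rightarrow> ennreal"
  assumes m: "(\<lambda>p. G (fst p) (snd p)) \<in> borel_measurable (lborel \<Otimes>\<^sub>M M)"
    and eq: "\<And>s \<omega>. t \<le> s \<Longrightarrow> G s \<omega> = H s \<omega>"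
  shows "(\<lambda>\<omega>. \<integral>\<^sup>+ s\<in>{t..}. H s \<omega> \<partial>lborel) \<in> borel_measurable M"
proof -
  have e: "(\<integral>\<^sup>+ s\<in>{t..}. H s \<omega> \<partial>lborel) = (\<integral>\<^sup>+ s\<in>{t..}. G s \<omega> \<partial>lborel)" for \<omega>
    by (rule nn_integral_cong) (auto simp: eq indicator_def)
  have m2: "(\<lambda>p. G (fst p) (snd p) * indicator {t..} (fst p)) \<in> borel_measurable (lborel \<Otimes>\<^sub>M M)"
    using m by measurable
  have "(\<lambda>(\<omega>, s). G s \<omega> * indicator {t..} s) \<in> borel_measurable (M \<Otimes>\<^sub>M lborel)"
    using m2 by (subst measurable_pair_swap_iff) (simp add: case_prod_beta')
  then have "(\<lambda>\<omega>. \<integral>\<^sup>+ s\<in>{t..}. G s \<omega> \<partial>lborel) \<in> borel_measurable M"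
    by (rule lborel.borel_measurable_nn_integral)
  then show ?thesis unfolding e .
qed

lemma hEZ_meas[measurable]:
  assumes [measurable]: "f \<in> borel_measurable N" "g \<in> borel_measurable N"
  shows "(\<lambda>x. h_EZ \<theta> (f x) (g x)) \<in> borel_measurable N"
  unfolding h_EZ_def by measurable

locale main_setting = filt M F for M :: "'a measure" and F +
  fixes \<theta> t0 :: real and U W Ut :: "real \<Rightarrow> 'a \<Rightarrow> real" and A :: "'a set"
  assumes th: "\<theta> > 1"
    and Unn: "nonneg_process M U" and Uprog: "prog_measurable M F U"
    and Wup: "utility_process M F (h_EZ \<theta>) U W"
    and t0: "t0 \<ge> 0" and Uzero: "\<forall>t. 0 \<le> t \<and> t < t0 \<longrightarrow> (\<forall>\<omega>\<in>space M. U t \<omega> = 0)"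
    and A: "A \<in> sets (F t0)"
    and Utnn: "nonneg_process M Ut" and Utprog: "prog_measurable M F Ut"
    and Utce: "\<forall>t\<ge>0. AE \<omega> in M. Ut t \<omega> = real_cond_exp M (F t) (indicator A) \<omega> * U t \<omega>"
begin

lemma Wnn: "t \<ge> 0 \<Longrightarrow> \<omega> \<in> space M \<Longrightarrow> W t \<omega> \<ge> 0"
  using Wup by (auto simp: utility_process_def nonneg_process_def)
lemma Wcad: "cadlag M W" using Wup by (simp add: utility_process_def)
lemma Wprog: "prog_measurable M F W" using Wup by (simp add: utility_process_def)
lemma Wint: "(\<integral>\<^sup>+\<omega>. (\<integral>\<^sup>+ s\<in>{0..}. ennreal (h_EZ \<theta> (U s \<omega>) (W s \<omega>)) \<partial>lborel) \<partial>M) < \<infinity>"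
  using Wup by (simp add: utility_process_def)
lemma Wce: "t \<ge> 0 \<Longrightarrow> AE \<omega> in M. W t \<omega> =
        real_cond_exp M (F t) (\<lambda>\<omega>. enn2real (\<integral>\<^sup>+ s\<in>{t..}. ennreal (h_EZ \<theta> (U s \<omega>) (W s \<omega>)) \<partial>lborel)) \<omega>"
  using Wup by (simp add: utility_process_def)

lemma A_M: "A \<in> sets M" using A t0 by (rule setsF1[rotated])
lemma A_F: "t0 \<le> t \<Longrightarrow> A \<in> sets (F t)" using A t0 by (intro setsF2[of t0 t]) auto

lemma W_F: "t \<ge> 0 \<Longrightarrow> W t \<in> borel_measurable (F t)" using Wprog by (rule prog_adapted)
lemma W_M: assumes "t \<ge> 0" shows "W t \<in> borel_measurable M"
  using measF[OF assms W_F[OF assms]] .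

definition I :: "real \<Rightarrow> 'a \<Rightarrow> ennreal" where
  "I t \<omega> = (\<integral>\<^sup>+ s\<in>{t..}. ennreal (h_EZ \<theta> (U s \<omega>) (W s \<omega>)) \<partial>lborel)"
definition Z :: "real \<Rightarrow> 'a \<Rightarrow> real" where "Z t \<omega> = enn2real (I t \<omega>)"

definition bar :: "(real \<Rightarrow> 'a \<Rightarrow> real) \<Rightarrow> real \<Rightarrow> 'a \<Rightarrow> real" where
  "bar X s \<omega> = (if 0 \<le> s then X s \<omega> else 0)"

lemma bar_meas: "prog_measurable M F X \<Longrightarrow> (\<lambda>p. bar X (fst p) (snd p)) \<in> borel_measurable (lborel \<Otimes>\<^sub>M M)"
  using prog_joint[of X] by (simp add: bar_def case_prod_beta')

lemma HUW_meas: "(\<lambda>p. ennreal (h_EZ \<theta> (bar U (fst p) (snd p)) (bar W (fst p) (snd p)))) \<in> borel_measurable (lborel \<Otimes>\<^sub>M M)"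
proof -
  have [measurable]: "(\<lambda>p. bar U (fst p) (snd p)) \<in> borel_measurable (lborel \<Otimes>\<^sub>M M)"
    by (rule bar_meas[OF Uprog])
  have [measurable]: "(\<lambda>p. bar W (fst p) (snd p)) \<in> borel_measurable (lborel \<Otimes>\<^sub>M M)"
    by (rule bar_meas[OF Wprog])
  show ?thesis by measurable
qed

lemma I_meas: "t \<ge> 0 \<Longrightarrow> I t \<in> borel_measurable M"
  unfolding I_def
  by (rule nn_int_meas[OF HUW_meas]) (auto simp: bar_def)

lemma Z_meas: "t \<ge> 0 \<Longrightarrow> Z t \<in> borel_measurable M"
  unfolding Z_def using I_meas by measurable

lemma I_mono: "0 \<le> s \<Longrightarrow> s \<le> t \<Longrightarrow> I t \<omega> \<le> I s \<omega>"
  unfolding I_def by (intro nn_integral_mono) (auto simp: indicator_def)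

lemma I_int: "t \<ge> 0 \<Longrightarrow> (\<integral>\<^sup>+\<omega>. I t \<omega> \<partial>M) < \<infinity>"
proof -
  assume t: "t \<ge> 0"
  have "(\<integral>\<^sup>+\<omega>. I t \<omega> \<partial>M) \<le> (\<integral>\<^sup>+\<omega>. I 0 \<omega> \<partial>M)"
    using t by (intro nn_integral_mono I_mono) auto
  also have "\<dots> < \<infinity>" using Wint by (simp add: I_def)
  finally show ?thesis .
qed

lemma Z_int: "t \<ge> 0 \<Longrightarrow> integrable M (Z t)"
proof -
  assume t: "t \<ge> 0"
  show ?thesis
  proof (rule integrableI_bounded[OF Z_meas[OF t]])
    have "(\<integral>\<^sup>+\<omega>. ennreal (norm (Z t \<omega>)) \<partial>M) \<le> (\<integral>\<^sup>+\<omega>. I t \<omega> \<partial>M)"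
    proof (rule nn_integral_mono)
      fix \<omega> show "ennreal (norm (Z t \<omega>)) \<le> I t \<omega>"
        unfolding Z_def by (cases "I t \<omega>") auto
    qed
    also have "\<dots> < \<infinity>" by (rule I_int[OF t])
    finally show "(\<integral>\<^sup>+\<omega>. ennreal (norm (Z t \<omega>)) \<partial>M) < \<infinity>" .
  qed
qed

lemma I_fin: assumes "t \<ge> 0" shows "AE \<omega> in M. I t \<omega> \<noteq> \<infinity>"
  by (rule nn_integral_PInf_AE[OF I_meas[OF assms]]) (use I_int[OF assms] in simp)

lemma Wce': assumes "t \<ge> 0" shows "AE \<omega> in M. W t \<omega> = real_cond_exp M (F t) (Z t) \<omega>"
  unfolding Z_def[abs_def] I_def using Wce[OF assms] .

lemma W_int: "t \<ge> 0 \<Longrightarrow> integrable M (W t)"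
proof -
  assume t: "t \<ge> 0"
  have "integrable M (real_cond_exp M (F t) (Z t))"
    by (rule sigma_finite_subalgebra.real_cond_exp_int(1)[OF sfs[OF t] Z_int[OF t]])
  then show ?thesis
    by (rule integrable_cong_AE_imp[OF _ W_M[OF t]]) (use Wce'[OF t] in \<open>auto elim: eventually_mono\<close>)
qed

lemma I_const: "0 \<le> s \<Longrightarrow> s \<le> t0 \<Longrightarrow> \<omega> \<in> space M \<Longrightarrow> I s \<omega> = I t0 \<omega>"
  unfolding I_def
proof (rule nn_integral_cong)
  fix r :: real
  assume s: "0 \<le> s" "s \<le> t0" and w: "\<omega> \<in> space M"
  show "ennreal (h_EZ \<theta> (U r \<omega>) (W r \<omega>)) * indicator {s..} r = ennreal (h_EZ \<theta> (U r \<omega>) (W r \<omega>)) * indicator {t0..} r"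
  proof (cases "s \<le> r \<and> r < t0")
    case True
    then have "U r \<omega> = 0" using Uzero w s by auto
    then show ?thesis by (simp add: h_EZ_def)
  next
    case False
    then show ?thesis using s by (auto simp: indicator_def)
  qed
qed

abbreviation X where "X \<equiv> W t0"
definition Y where "Y \<omega> = indicator A \<omega> * W t0 \<omega>"

lemma X_int: "integrable M X" by (rule W_int[OF t0])
lemma Y_int: "integrable M Y"
  unfolding Y_def using integrable_mult_indicator[OF A_M X_int] by simp
lemma Y_nn: "AE \<omega> in M. 0 \<le> Y \<omega>"
  using Wnn[OF t0] by (auto simp: Y_def intro!: AE_I2)
lemma Y_le_X: "\<omega> \<in> space M \<Longrightarrow> Y \<omega> \<le> X \<omega>"
  using Wnn[OF t0] by (auto simp: Y_def indicator_def)

lemma W_mart: "0 \<le> s \<Longrightarrow> s \<le> t0 \<Longrightarrow> AE \<omega> in M. W s \<omega> = real_cond_exp M (F s) X \<omega>"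
proof -
  assume s: "0 \<le> s" "s \<le> t0"
  interpret S: sigma_finite_subalgebra M "F s" by (rule sfs[OF s(1)])
  have zeq: "\<omega> \<in> space M \<Longrightarrow> Z s \<omega> = Z t0 \<omega>" for \<omega> using I_const[OF s] by (simp add: Z_def)
  have "AE \<omega> in M. real_cond_exp M (F s) (Z s) \<omega> = real_cond_exp M (F s) (Z t0) \<omega>"
    by (rule S.real_cond_exp_cong) (use zeq Z_meas s t0 in \<open>auto intro!: AE_I2\<close>)
  moreover have "AE \<omega> in M. real_cond_exp M (F s) (real_cond_exp M (F t0) (Z t0)) \<omega> = real_cond_exp M (F s) (Z t0) \<omega>"
    by (rule S.real_cond_exp_nested_subalg[OF subalg[OF t0] subalg2[OF s] Z_int[OF t0]])
  moreover have "AE \<omega> in M. real_cond_exp M (F s) (real_cond_exp M (F t0) (Z t0)) \<omega> = real_cond_exp M (F s) X \<omega>"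
    by (rule S.real_cond_exp_cong) (use Wce'[OF t0] W_M[OF t0] in \<open>auto elim: eventually_mono\<close>)
  moreover have "AE \<omega> in M. W s \<omega> = real_cond_exp M (F s) (Z s) \<omega>" by (rule Wce'[OF s(1)])
  ultimately show ?thesis by eventually_elim simp
qed

end


lemma ev_mem: "eventually (\<lambda>s. s \<in> S) (at (x::real) within S)"
  unfolding eventually_at_filter by simp

context main_setting
begin

definition D :: "real set" where "D = {q \<in> \<rat>. 0 \<le> q \<and> q < t0}"

lemma D_count: "countable D"
  unfolding D_def by (rule countable_subset[OF _ countable_rat]) auto
lemma D_sub: "D \<subseteq> {0..}" by (auto simp: D_def)
lemma D_lt: "s \<in> D \<Longrightarrow> 0 \<le> s \<and> s < t0" by (auto simp: D_def)
lemma D_dense: "0 \<le> x \<Longrightarrow> x < y \<Longrightarrow> y \<le> t0 \<Longrightarrow> \<exists>q\<in>D. x < q \<and> q < y"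
proof -
  assume xy: "0 \<le> x" "x < y" "y \<le> t0"
  obtain q where q: "q \<in> \<rat>" "x < q" "q < y" using Rats_dense_in_real[OF xy(2)] by blast
  then have "q \<in> D" using xy by (auto simp: D_def)
  then show ?thesis using q by blast
qed
lemma regD_D: "regD D t0" by unfold_locales (rule D_dense)

definition good :: "'a \<Rightarrow> bool" where
  "good \<omega> \<longleftrightarrow> (\<forall>s\<in>D. 0 \<le> cx Y s \<omega> \<and> cx Y s \<omega> \<le> W s \<omega>) \<and>
     (\<forall>a\<in>\<rat>. \<forall>b\<in>\<rat>. a < b \<longrightarrow> (\<exists>N. \<forall>l. \<not> is_chain (\<lambda>s. cx Y s \<omega>) D a b N l))"

lemma good_AE: "AE \<omega> in M. good \<omega>"
proof -
  have "\<forall>s\<in>D. AE \<omega> in M. 0 \<le> cx Y s \<omega> \<and> cx Y s \<omega> \<le> W s \<omega>"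
  proof
    fix s assume s: "s \<in> D"
    have s0: "0 \<le> s" "s \<le> t0" using D_lt[OF s] by auto
    interpret S: sigma_finite_subalgebra M "F s" by (rule sfs[OF s0(1)])
    have cxs: "cx Y s = real_cond_exp M (F s) Y" using s0 by (simp add: cx_def)
    have a1: "AE \<omega> in M. 0 \<le> cx Y s \<omega>" by (rule cx_pos[OF Y_int Y_nn])
    have a2: "AE \<omega> in M. real_cond_exp M (F s) Y \<omega> \<le> real_cond_exp M (F s) X \<omega>"
      by (rule S.real_cond_exp_mono[OF _ Y_int X_int]) (use Y_le_X in \<open>auto intro!: AE_I2\<close>)
    have a3: "AE \<omega> in M. W s \<omega> = real_cond_exp M (F s) X \<omega>" by (rule W_mart[OF s0])
    show "AE \<omega> in M. 0 \<le> cx Y s \<omega> \<and> cx Y s \<omega> \<le> W s \<omega>"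
      using a1 a2 a3 unfolding cxs by eventually_elim simp
  qed
  then have b1: "AE \<omega> in M. \<forall>s\<in>D. 0 \<le> cx Y s \<omega> \<and> cx Y s \<omega> \<le> W s \<omega>"
    by (subst AE_ball_countable[OF D_count])
  have b2: "AE \<omega> in M. \<forall>a\<in>\<rat>. \<forall>b\<in>\<rat>. a < b \<longrightarrow> (\<exists>N. \<forall>l. \<not> is_chain (\<lambda>s. cx Y s \<omega>) D a b N l)"
    by (rule ae_nochain_all[OF D_count D_sub Y_int Y_nn])
  show ?thesis using b1 b2 unfolding good_def by eventually_elim simp
qed

definition N0 :: "'a set" where
  "N0 = (SOME N. N \<in> null_sets M \<and> {\<omega>\<in>space M. \<not> good \<omega>} \<subseteq> N)"

lemma N0_prop: "N0 \<in> null_sets M \<and> {\<omega>\<in>space M. \<not> good \<omega>} \<subseteq> N0"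
proof -
  obtain N where "{\<omega>\<in>space M. \<not> good \<omega>} \<subseteq> N" "emeasure M N = 0" "N \<in> sets M"
    using good_AE by (rule AE_E)
  then have "\<exists>N. N \<in> null_sets M \<and> {\<omega>\<in>space M. \<not> good \<omega>} \<subseteq> N" by auto
  then show ?thesis unfolding N0_def by (rule someI_ex)
qed

definition Om :: "'a set" where "Om = space M - N0"

lemma Om_good: "\<omega> \<in> Om \<Longrightarrow> \<omega> \<in> space M \<and> good \<omega>"
  using N0_prop by (auto simp: Om_def)

lemma Om_AE: "AE \<omega> in M. \<omega> \<in> Om"
proof (rule AE_I')
  show "N0 \<in> null_sets M" using N0_prop by simp
  show "{\<omega> \<in> space M. \<omega> \<notin> Om} \<subseteq> N0" by (auto simp: Om_def)
qed

lemma N0_F0: "N0 \<in> sets (F 0)"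
proof -
  have n: "N0 \<in> null_sets M" using N0_prop by simp
  then have "N0 \<subseteq> space M" using null_sets.sets_into_space by blast
  moreover have "\<exists>B\<in>null_sets M. N0 \<subseteq> B" using n by blast
  ultimately show ?thesis using stdE(4) by blast
qed

lemma Om_F: "t \<ge> 0 \<Longrightarrow> Om \<in> sets (F t)"
proof -
  assume t: "t \<ge> 0"
  have "space (F 0) - N0 \<in> sets (F 0)" using N0_F0 by (rule sets.compl_sets)
  then have "Om \<in> sets (F 0)" unfolding Om_def using spaceF[of 0] by simp
  then show ?thesis using t by (intro setsF2[of 0 t]) auto
qed

lemma W_rc: "\<omega> \<in> space M \<Longrightarrow> t \<ge> 0 \<Longrightarrow> ((\<lambda>s. W s \<omega>) \<longlongrightarrow> W t \<omega>) (at_right t)"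
  using Wcad unfolding cadlag_def continuous_within by blast

lemma W_ll: "\<omega> \<in> space M \<Longrightarrow> t > 0 \<Longrightarrow> \<exists>l. ((\<lambda>s. W s \<omega>) \<longlongrightarrow> l) (at_left t)"
  using Wcad unfolding cadlag_def by (meson less_imp_le)

lemma rlim_ex:
  assumes w: "\<omega> \<in> Om" and t: "0 \<le> t" "t < t0"
  shows "\<exists>l. ((\<lambda>s. cx Y s \<omega>) \<longlongrightarrow> l) (at t within (D \<inter> {t<..}))"
proof -
  have wg: "\<omega> \<in> space M" "good \<omega>" using Om_good[OF w] by auto
  have NC: "\<forall>a\<in>\<rat>. \<forall>b\<in>\<rat>. a < b \<longrightarrow> (\<exists>N. \<forall>l. \<not> is_chain (\<lambda>s. cx Y s \<omega>) D a b N l)"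
    using wg(2) by (simp add: good_def)
  have e1: "eventually (\<lambda>s. W s \<omega> < W t \<omega> + 1) (at_right t)"
    using W_rc[OF wg(1) t(1)] by (rule order_tendstoD) simp
  have e1': "eventually (\<lambda>s. W s \<omega> < W t \<omega> + 1) (at t within (D \<inter> {t<..}))"
    by (rule filter_leD[OF at_le e1]) auto
  have "eventually (\<lambda>s. 0 \<le> cx Y s \<omega> \<and> cx Y s \<omega> \<le> W t \<omega> + 1) (at t within (D \<inter> {t<..}))"
    using e1' ev_mem[of "D \<inter> {t<..}" t]
  proof eventually_elim
    case (elim s)
    then have "0 \<le> cx Y s \<omega> \<and> cx Y s \<omega> \<le> W s \<omega>" using wg(2) by (simp add: good_def)
    then show ?case using elim by simp
  qed
  then show ?thesis by (rule right_lim[OF NC regD.nb_right[OF regD_D t]])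
qed

lemma llim_ex:
  assumes w: "\<omega> \<in> Om" and t: "0 < t" "t \<le> t0"
  shows "\<exists>l. ((\<lambda>s. cx Y s \<omega>) \<longlongrightarrow> l) (at t within (D \<inter> {..<t}))"
proof -
  have wg: "\<omega> \<in> space M" "good \<omega>" using Om_good[OF w] by auto
  have NC: "\<forall>a\<in>\<rat>. \<forall>b\<in>\<rat>. a < b \<longrightarrow> (\<exists>N. \<forall>l. \<not> is_chain (\<lambda>s. cx Y s \<omega>) D a b N l)"
    using wg(2) by (simp add: good_def)
  obtain lw where lw: "((\<lambda>s. W s \<omega>) \<longlongrightarrow> lw) (at_left t)" using W_ll[OF wg(1) t(1)] by blast
  have e1: "eventually (\<lambda>s. W s \<omega> < lw + 1) (at_left t)"
    using lw by (rule order_tendstoD) simp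
  have e1': "eventually (\<lambda>s. W s \<omega> < lw + 1) (at t within (D \<inter> {..<t}))"
    by (rule filter_leD[OF at_le e1]) auto
  have "eventually (\<lambda>s. 0 \<le> cx Y s \<omega> \<and> cx Y s \<omega> \<le> lw + 1) (at t within (D \<inter> {..<t}))"
    using e1' ev_mem[of "D \<inter> {..<t}" t]
  proof eventually_elim
    case (elim s)
    then have "0 \<le> cx Y s \<omega> \<and> cx Y s \<omega> \<le> W s \<omega>" using wg(2) by (simp add: good_def)
    then show ?case using elim by simp
  qed
  then show ?thesis by (rule left_lim[OF NC regD.nb_left[OF regD_D t]])
qed

definition gfun :: "'a \<Rightarrow> real \<Rightarrow> real" where
  "gfun \<omega> t = Lim (at t within (D \<inter> {t<..})) (\<lambda>s. cx Y s \<omega>)"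
definition lfun :: "'a \<Rightarrow> real \<Rightarrow> real" where
  "lfun \<omega> t = Lim (at t within (D \<inter> {..<t})) (\<lambda>s. cx Y s \<omega>)"

lemma g_lim:
  assumes w: "\<omega> \<in> Om" and t: "0 \<le> t" "t < t0"
  shows "((\<lambda>s. cx Y s \<omega>) \<longlongrightarrow> gfun \<omega> t) (at t within (D \<inter> {t<..}))"
proof -
  obtain l where l: "((\<lambda>s. cx Y s \<omega>) \<longlongrightarrow> l) (at t within (D \<inter> {t<..}))" using rlim_ex[OF assms] by blast
  have "gfun \<omega> t = l" unfolding gfun_def by (rule tendsto_Lim[OF regD.nb_right[OF regD_D t] l])
  then show ?thesis using l by simp
qed

lemma l_lim:
  assumes w: "\<omega> \<in> Om" and t: "0 < t" "t \<le> t0"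
  shows "((\<lambda>s. cx Y s \<omega>) \<longlongrightarrow> lfun \<omega> t) (at t within (D \<inter> {..<t}))"
proof -
  obtain l where l: "((\<lambda>s. cx Y s \<omega>) \<longlongrightarrow> l) (at t within (D \<inter> {..<t}))" using llim_ex[OF assms] by blast
  have "lfun \<omega> t = l" unfolding lfun_def by (rule tendsto_Lim[OF regD.nb_left[OF regD_D t] l])
  then show ?thesis using l by simp
qed

lemma g_nn:
  assumes w: "\<omega> \<in> Om" and t: "0 \<le> t" "t < t0"
  shows "0 \<le> gfun \<omega> t"
proof (rule tendsto_lowerbound[OF g_lim[OF assms] _ regD.nb_right[OF regD_D t]])
  have wg: "good \<omega>" using Om_good[OF w] by auto
  show "eventually (\<lambda>s. 0 \<le> cx Y s \<omega>) (at t within (D \<inter> {t<..}))"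
    using ev_mem[of "D \<inter> {t<..}" t] by eventually_elim (use wg in \<open>simp add: good_def\<close>)
qed

definition Wt :: "real \<Rightarrow> 'a \<Rightarrow> real" where
  "Wt s \<omega> = (if s < t0 then (if \<omega> \<in> Om then gfun \<omega> s else 0) else indicator A \<omega> * W s \<omega>)"

lemma Wt_nn: "0 \<le> s \<Longrightarrow> \<omega> \<in> space M \<Longrightarrow> 0 \<le> Wt s \<omega>"
  using g_nn Wnn by (auto simp: Wt_def)

lemma Wt_rc:
  assumes w: "\<omega> \<in> space M" and t: "0 \<le> t"
  shows "((\<lambda>s. Wt s \<omega>) \<longlongrightarrow> Wt t \<omega>) (at_right t)"
proof (cases "t < t0")
  case True
  have ev: "eventually (\<lambda>s. (if \<omega> \<in> Om then gfun \<omega> s else 0) = Wt s \<omega>) (at_right t)"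
    unfolding eventually_at_right_field using True by (auto simp: Wt_def intro!: exI[of _ t0])
  have "((\<lambda>s. if \<omega> \<in> Om then gfun \<omega> s else 0) \<longlongrightarrow> (if \<omega> \<in> Om then gfun \<omega> t else 0)) (at_right t)"
  proof (cases "\<omega> \<in> Om")
    case True
    have "(gfun \<omega> \<longlongrightarrow> gfun \<omega> t) (at_right t)"
      by (rule regD.reg_right_cont[OF regD_D, where \<phi>="\<lambda>s. cx Y s \<omega>"]) (use g_lim[OF True] \<open>t < t0\<close> t in auto)
    then show ?thesis using True by simp
  next
    case False
    then show ?thesis by simp
  qed
  then have "((\<lambda>s. Wt s \<omega>) \<longlongrightarrow> (if \<omega> \<in> Om then gfun \<omega> t else 0)) (at_right t)"
    by (rule Lim_transform_eventually[OF _ ev])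
  then show ?thesis using True by (simp add: Wt_def)
next
  case False
  have ev: "eventually (\<lambda>s. indicator A \<omega> * W s \<omega> = Wt s \<omega>) (at_right t)"
    using eventually_at_right_less[of t] by eventually_elim (use False in \<open>auto simp: Wt_def\<close>)
  have "((\<lambda>s. indicator A \<omega> * W s \<omega>) \<longlongrightarrow> indicator A \<omega> * W t \<omega>) (at_right t)"
    by (rule tendsto_mult_left[OF W_rc[OF w t]])
  then have "((\<lambda>s. Wt s \<omega>) \<longlongrightarrow> indicator A \<omega> * W t \<omega>) (at_right t)"
    by (rule Lim_transform_eventually[OF _ ev])
  then show ?thesis using False by (simp add: Wt_def)
qed

lemma Wt_ll:
  assumes w: "\<omega> \<in> space M" and t: "0 < t"
  shows "\<exists>l. ((\<lambda>s. Wt s \<omega>) \<longlongrightarrow> l) (at_left t)"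
proof (cases "t \<le> t0")
  case True
  have ev: "eventually (\<lambda>s. (if \<omega> \<in> Om then gfun \<omega> s else 0) = Wt s \<omega>) (at_left t)"
    unfolding eventually_at_left_field using True t by (auto simp: Wt_def intro!: exI[of _ 0])
  have "\<exists>l. ((\<lambda>s. if \<omega> \<in> Om then gfun \<omega> s else 0) \<longlongrightarrow> l) (at_left t)"
  proof (cases "\<omega> \<in> Om")
    case True
    have "(gfun \<omega> \<longlongrightarrow> lfun \<omega> t) (at_left t)"
      by (rule regD.reg_left_lim[OF regD_D, where \<phi>="\<lambda>s. cx Y s \<omega>"])
         (use g_lim[OF True] l_lim[OF True t \<open>t \<le> t0\<close>] \<open>t \<le> t0\<close> t in auto)
    then show ?thesis using True by auto
  next
    case False
    then show ?thesis by auto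
  qed
  then obtain l where "((\<lambda>s. if \<omega> \<in> Om then gfun \<omega> s else 0) \<longlongrightarrow> l) (at_left t)" by blast
  then have "((\<lambda>s. Wt s \<omega>) \<longlongrightarrow> l) (at_left t)"
    by (rule Lim_transform_eventually[OF _ ev])
  then show ?thesis by blast
next
  case False
  have ev: "eventually (\<lambda>s. indicator A \<omega> * W s \<omega> = Wt s \<omega>) (at_left t)"
    unfolding eventually_at_left_field using False by (auto simp: Wt_def intro!: exI[of _ t0])
  obtain lw where lw: "((\<lambda>s. W s \<omega>) \<longlongrightarrow> lw) (at_left t)" using W_ll[OF w t] by blast
  have "((\<lambda>s. indicator A \<omega> * W s \<omega>) \<longlongrightarrow> indicator A \<omega> * lw) (at_left t)"
    by (rule tendsto_mult_left[OF lw])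
  then have "((\<lambda>s. Wt s \<omega>) \<longlongrightarrow> indicator A \<omega> * lw) (at_left t)"
    by (rule Lim_transform_eventually[OF _ ev])
  then show ?thesis by blast
qed

lemma Wt_cadlag: "cadlag M Wt"
  unfolding cadlag_def continuous_within using Wt_rc Wt_ll by blast

end


context main_setting
begin

definition sq :: "real \<Rightarrow> nat \<Rightarrow> real" where
  "sq t n = (SOME q. q \<in> D \<and> t < q \<and> q < min t0 (t + 1 / real (Suc n)))"

lemma sq_prop:
  assumes t: "0 \<le> t" "t < t0"
  shows "sq t n \<in> D \<and> t < sq t n \<and> sq t n < min t0 (t + 1 / real (Suc n))"
proof -
  have "t < min t0 (t + 1 / real (Suc n))" using t by simp
  then have "\<exists>q\<in>D. t < q \<and> q < min t0 (t + 1 / real (Suc n))"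
    using D_dense[OF t(1) _ min.cobounded1] by blast
  then have "\<exists>q. q \<in> D \<and> t < q \<and> q < min t0 (t + 1 / real (Suc n))" by blast
  then show ?thesis unfolding sq_def by (rule someI_ex)
qed

lemma sq_lim:
  assumes t: "0 \<le> t" "t < t0"
  shows "sq t \<longlonglongrightarrow> t"
proof (rule tendsto_sandwich[of "\<lambda>n. t" _ _ "\<lambda>n. t + 1 / real (Suc n)"])
  show "eventually (\<lambda>n. t \<le> sq t n) sequentially"
    using sq_prop[OF t] by (intro always_eventually allI) (simp add: less_imp_le)
  show "eventually (\<lambda>n. sq t n \<le> t + 1 / real (Suc n)) sequentially"
    using sq_prop[OF t] by (intro always_eventually allI) (simp add: less_imp_le)
  show "(\<lambda>n. t) \<longlonglongrightarrow> t" by simp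
  have "(\<lambda>n. t + 1 / real (Suc n)) \<longlonglongrightarrow> t + 0"
    by (intro tendsto_add tendsto_const LIMSEQ_Suc[OF lim_const_over_n])
  then show "(\<lambda>n. t + 1 / real (Suc n)) \<longlonglongrightarrow> t" by simp
qed

lemma sq_filt:
  assumes t: "0 \<le> t" "t < t0"
  shows "filterlim (sq t) (at t within (D \<inter> {t<..})) sequentially"
  unfolding filterlim_at
proof
  show "eventually (\<lambda>n. sq t n \<in> D \<inter> {t<..} \<and> sq t n \<noteq> t) sequentially"
  proof (intro always_eventually allI)
    fix n show "sq t n \<in> D \<inter> {t<..} \<and> sq t n \<noteq> t"
      using sq_prop[OF t, of n] by auto
  qed
  show "sq t \<longlonglongrightarrow> t" by (rule sq_lim[OF t])
qed

lemma sq_filt_r: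
  assumes t: "0 \<le> t" "t < t0"
  shows "filterlim (sq t) (at_right t) sequentially"
  unfolding filterlim_at
proof
  show "eventually (\<lambda>n. sq t n \<in> {t<..} \<and> sq t n \<noteq> t) sequentially"
  proof (intro always_eventually allI)
    fix n show "sq t n \<in> {t<..} \<and> sq t n \<noteq> t"
      using sq_prop[OF t, of n] by auto
  qed
  show "sq t \<longlonglongrightarrow> t" by (rule sq_lim[OF t])
qed

lemma cx_sq_lim:
  assumes w: "\<omega> \<in> Om" and t: "0 \<le> t" "t < t0"
  shows "(\<lambda>n. cx Y (sq t n) \<omega>) \<longlonglongrightarrow> gfun \<omega> t"
  by (rule filterlim_compose[OF g_lim[OF w t] sq_filt[OF t]])

lemma W_sq_lim:
  assumes w: "\<omega> \<in> space M" and t: "0 \<le> t" "t < t0"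
  shows "(\<lambda>n. W (sq t n) \<omega>) \<longlonglongrightarrow> W t \<omega>"
  by (rule filterlim_compose[OF W_rc[OF w t(1)] sq_filt_r[OF t]])

lemma V_meas_r:
  assumes t: "0 \<le> t" "t < t0" and r: "t < r"
  shows "Wt t \<in> borel_measurable (F r)"
proof -
  have "0 < r - t" using r by simp
  from reals_Archimedean[OF this] obtain N where N: "inverse (real (Suc N)) < r - t" by blast
  have sqr: "sq t (n + N) \<le> r" for n
  proof -
    have "sq t (n + N) < t + 1 / real (Suc (n + N))" using sq_prop[OF t, of "n + N"] by simp
    also have "1 / real (Suc (n + N)) \<le> 1 / real (Suc N)" by (intro divide_left_mono) auto
    finally show ?thesis using N by (simp add: inverse_eq_divide)
  qed
  have r0: "0 \<le> r" using t r by simp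
  define Vn where "Vn n \<omega> = (if \<omega> \<in> Om then cx Y (sq t (n + N)) \<omega> else 0)" for n \<omega>
  have Vm: "Vn n \<in> borel_measurable (F r)" for n
  proof -
    have s0: "0 \<le> sq t (n + N)" using sq_prop[OF t, of "n+N"] t by simp
    have "cx Y (sq t (n + N)) \<in> borel_measurable (F (sq t (n + N)))"
      using cx_measF[of Y "sq t (n + N)"] s0 by simp
    then have c: "cx Y (sq t (n + N)) \<in> borel_measurable (F r)"
      by (rule measF2[OF s0 sqr])
    have "Om \<inter> space (F r) = Om" using spaceF[OF r0] by (auto simp: Om_def)
    then have o: "Om \<inter> space (F r) \<in> sets (F r)" using Om_F[OF r0] by simp
    have "(\<lambda>\<omega>. if \<omega> \<in> Om then cx Y (sq t (n + N)) \<omega> else 0) \<in> borel_measurable (F r)"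
      by (rule measurable_If_set[OF c measurable_const o]) simp
    then show ?thesis by (simp add: Vn_def[abs_def])
  qed
  have lim: "(\<lambda>n. Vn n \<omega>) \<longlonglongrightarrow> (if \<omega> \<in> Om then gfun \<omega> t else 0)" for \<omega>
  proof (cases "\<omega> \<in> Om")
    case True
    have "(\<lambda>n. cx Y (sq t (n + N)) \<omega>) \<longlonglongrightarrow> gfun \<omega> t"
      using LIMSEQ_ignore_initial_segment[OF cx_sq_lim[OF True t], of N] by simp
    then show ?thesis using True by (simp add: Vn_def)
  next
    case False
    then show ?thesis by (simp add: Vn_def)
  qed
  have "(\<lambda>\<omega>. if \<omega> \<in> Om then gfun \<omega> t else 0) \<in> borel_measurable (F r)"
    by (rule borel_measurable_LIMSEQ_real[OF lim Vm])
  moreover have "Wt t = (\<lambda>\<omega>. if \<omega> \<in> Om then gfun \<omega> t else 0)"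
    using t by (simp add: Wt_def[abs_def])
  ultimately show ?thesis by simp
qed

lemma Wt_adapted:
  assumes t: "0 \<le> t"
  shows "Wt t \<in> borel_measurable (F t)"
proof (cases "t < t0")
  case True
  show ?thesis
  proof (rule measurableI)
    fix x show "Wt t x \<in> space borel" by simp
  next
    fix B :: "real set" assume B: "B \<in> sets borel"
    have "Wt t -` B \<inter> space (F t) \<in> sets (F r)" if r: "r \<in> {t<..}" for r
    proof -
      have r0: "0 \<le> r" using r t by simp
      have "Wt t -` B \<inter> space (F r) \<in> sets (F r)"
        by (rule measurable_sets[OF V_meas_r[OF t True] B]) (use r in simp)
      then show ?thesis using spaceF[OF r0] spaceF[OF t] by simp
    qed
    then have "Wt t -` B \<inter> space (F t) \<in> (\<Inter>r\<in>{t<..}. sets (F r))" by blast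
    then show "Wt t -` B \<inter> space (F t) \<in> sets (F t)" using stdE(5) t by blast
  qed
next
  case False
  have [measurable]: "A \<in> sets (F t)" using A_F False by simp
  have [measurable]: "W t \<in> borel_measurable (F t)" by (rule W_F[OF t])
  have "(\<lambda>\<omega>. indicator A \<omega> * W t \<omega>) \<in> borel_measurable (F t)" by measurable
  moreover have "Wt t = (\<lambda>\<omega>. indicator A \<omega> * W t \<omega>)" using False by (simp add: Wt_def[abs_def])
  ultimately show ?thesis by simp
qed

lemma Wt_prog: "prog_measurable M F Wt"
proof (rule cadlag_prog)
  show "\<And>t. 0 \<le> t \<Longrightarrow> Wt t \<in> borel_measurable (F t)" by (rule Wt_adapted)
  show "\<And>\<omega> t. \<omega> \<in> space M \<Longrightarrow> 0 \<le> t \<Longrightarrow> continuous (at_right t) (\<lambda>s. Wt s \<omega>)"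
    unfolding continuous_within by (rule Wt_rc)
qed

lemma Wt_M: "0 \<le> t \<Longrightarrow> Wt t \<in> borel_measurable M"
  using Wt_adapted by (rule measF[rotated]) 

end


context main_setting
begin

lemma W_intB:
  assumes s: "0 \<le> s" "s \<le> t0" and B: "B \<in> sets (F s)"
  shows "(\<integral>\<omega>. indicator B \<omega> * W s \<omega> \<partial>M) = (\<integral>\<omega>. indicator B \<omega> * X \<omega> \<partial>M)"
proof -
  have BM: "B \<in> sets M" using B s by (intro setsF1[of s]) auto
  have "(\<integral>\<omega>. indicator B \<omega> * W s \<omega> \<partial>M) = (\<integral>\<omega>. indicator B \<omega> * cx X s \<omega> \<partial>M)"
  proof (rule integral_cong_AE)
    show "(\<lambda>\<omega>. indicator B \<omega> * W s \<omega>) \<in> borel_measurable M" using BM W_M[OF s(1)] by measurable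
    show "(\<lambda>\<omega>. indicator B \<omega> * cx X s \<omega>) \<in> borel_measurable M" using BM by measurable
    show "AE \<omega> in M. indicator B \<omega> * W s \<omega> = indicator B \<omega> * cx X s \<omega>"
      using W_mart[OF s] by eventually_elim (use s in \<open>simp add: cx_def\<close>)
  qed
  also have "\<dots> = (\<integral>\<omega>. indicator B \<omega> * X \<omega> \<partial>M)" by (rule cx_intA[OF X_int s(1) B])
  finally show ?thesis .
qed

lemma fatou_ident:
  assumes t: "0 \<le> t" "t < t0"
  shows "AE \<omega> in M. real_cond_exp M (F t) Y \<omega> = Wt t \<omega>"
proof -
  interpret S: sigma_finite_subalgebra M "F t" by (rule sfs[OF t(1)])
  define V where "V = Wt t"
  have VF: "V \<in> borel_measurable (F t)" unfolding V_def by (rule Wt_adapted[OF t(1)])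
  have VM: "V \<in> borel_measurable M" unfolding V_def by (rule Wt_M[OF t(1)])
  have Vg: "\<omega> \<in> Om \<Longrightarrow> V \<omega> = gfun \<omega> t" for \<omega> using t by (simp add: V_def Wt_def)
  have sq0: "0 \<le> sq t n" "t \<le> sq t n" "sq t n \<le> t0" for n
    using sq_prop[OF t, of n] t by auto
  have sqD: "sq t n \<in> D" for n using sq_prop[OF t, of n] by simp
  have part1: "integrable M (\<lambda>\<omega>. indicator B \<omega> * V \<omega>) \<and>
      (\<integral>\<omega>. indicator B \<omega> * V \<omega> \<partial>M) \<le> (\<integral>\<omega>. indicator B \<omega> * Y \<omega> \<partial>M)"
    if B: "B \<in> sets (F t)" for B
  proof (rule fatou_int[where f="\<lambda>n \<omega>. indicator B \<omega> * cx Y (sq t n) \<omega>"])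
    have BM: "B \<in> sets M" using B t by (intro setsF1[of t]) auto
    show "integrable M (\<lambda>\<omega>. indicator B \<omega> * cx Y (sq t n) \<omega>)" for n
      using integrable_mult_indicator[OF BM cx_int[OF Y_int]] by simp
    show "(\<lambda>\<omega>. indicator B \<omega> * V \<omega>) \<in> borel_measurable M" using BM VM by measurable
    show "AE \<omega> in M. \<forall>n. 0 \<le> indicator B \<omega> * cx Y (sq t n) \<omega>"
      using Om_AE
    proof eventually_elim
      case (elim \<omega>)
      then have "good \<omega>" using Om_good by blast
      then show ?case using sqD by (simp add: good_def)
    qed
    show "AE \<omega> in M. (\<lambda>n. indicator B \<omega> * cx Y (sq t n) \<omega>) \<longlonglongrightarrow> indicator B \<omega> * V \<omega>"
      using Om_AE
    proof eventually_elim
      case (elim \<omega>)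
      show ?case unfolding Vg[OF elim] by (intro tendsto_mult_left cx_sq_lim[OF elim t])
    qed
    show "(\<integral>\<omega>. indicator B \<omega> * cx Y (sq t n) \<omega> \<partial>M) = (\<integral>\<omega>. indicator B \<omega> * Y \<omega> \<partial>M)" for n
      by (rule cx_intA[OF Y_int sq0(1)]) (rule setsF2[OF t(1) sq0(2) B])
  qed
  have Vint: "integrable M V"
  proof -
    have "integrable M (\<lambda>\<omega>. indicator (space M) \<omega> * V \<omega>)"
      using part1[of "space M"] spaceF[OF t(1)] sets.top[of "F t"] by simp
    then show ?thesis
      by (rule Bochner_Integration.integrable_cong[OF refl, THEN iffD1, rotated]) simp
  qed
  have part2: "(\<integral>\<omega>. indicator B \<omega> * Y \<omega> \<partial>M) \<le> (\<integral>\<omega>. indicator B \<omega> * V \<omega> \<partial>M)"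
    if B: "B \<in> sets (F t)" for B
  proof -
    have BM: "B \<in> sets M" using B t by (intro setsF1[of t]) auto
    have iY: "integrable M (\<lambda>\<omega>. indicator B \<omega> * Y \<omega>)"
      using integrable_mult_indicator[OF BM Y_int] by simp
    have iX: "integrable M (\<lambda>\<omega>. indicator B \<omega> * X \<omega>)"
      using integrable_mult_indicator[OF BM X_int] by simp
    have iV: "integrable M (\<lambda>\<omega>. indicator B \<omega> * V \<omega>)"
      using integrable_mult_indicator[OF BM Vint] by simp
    have iW: "integrable M (\<lambda>\<omega>. indicator B \<omega> * W s \<omega>)" if "0 \<le> s" for s
      using integrable_mult_indicator[OF BM W_int[OF that]] by simp
    have iC: "integrable M (\<lambda>\<omega>. indicator B \<omega> * cx Y s \<omega>)" for s
      using integrable_mult_indicator[OF BM cx_int[OF Y_int]] by simp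
    have "integrable M (\<lambda>\<omega>. indicator B \<omega> * (W t \<omega> - V \<omega>)) \<and>
      (\<integral>\<omega>. indicator B \<omega> * (W t \<omega> - V \<omega>) \<partial>M) \<le> (\<integral>\<omega>. indicator B \<omega> * X \<omega> \<partial>M) - (\<integral>\<omega>. indicator B \<omega> * Y \<omega> \<partial>M)"
    proof (rule fatou_int[where f="\<lambda>n \<omega>. indicator B \<omega> * (W (sq t n) \<omega> - cx Y (sq t n) \<omega>)"])
      show "integrable M (\<lambda>\<omega>. indicator B \<omega> * (W (sq t n) \<omega> - cx Y (sq t n) \<omega>))" for n
        using Bochner_Integration.integrable_diff[OF iW[OF sq0(1)] iC] by (simp add: right_diff_distrib)
      show "(\<lambda>\<omega>. indicator B \<omega> * (W t \<omega> - V \<omega>)) \<in> borel_measurable M"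
        using BM VM W_M[OF t(1)] by measurable
      show "AE \<omega> in M. \<forall>n. 0 \<le> indicator B \<omega> * (W (sq t n) \<omega> - cx Y (sq t n) \<omega>)"
        using Om_AE
      proof eventually_elim
        case (elim \<omega>)
        then have "good \<omega>" using Om_good by blast
        then show ?case using sqD by (simp add: good_def)
      qed
      show "AE \<omega> in M. (\<lambda>n. indicator B \<omega> * (W (sq t n) \<omega> - cx Y (sq t n) \<omega>)) \<longlonglongrightarrow> indicator B \<omega> * (W t \<omega> - V \<omega>)"
        using Om_AE
      proof eventually_elim
        case (elim \<omega>)
        have w: "\<omega> \<in> space M" using Om_good[OF elim] by simp
        show ?case unfolding Vg[OF elim]
          by (intro tendsto_mult_left tendsto_diff W_sq_lim[OF w t] cx_sq_lim[OF elim t])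
      qed
      show "(\<integral>\<omega>. indicator B \<omega> * (W (sq t n) \<omega> - cx Y (sq t n) \<omega>) \<partial>M) =
          (\<integral>\<omega>. indicator B \<omega> * X \<omega> \<partial>M) - (\<integral>\<omega>. indicator B \<omega> * Y \<omega> \<partial>M)" for n
      proof -
        have Bn: "B \<in> sets (F (sq t n))" by (rule setsF2[OF t(1) sq0(2) B])
        have "(\<integral>\<omega>. indicator B \<omega> * (W (sq t n) \<omega> - cx Y (sq t n) \<omega>) \<partial>M) =
            (\<integral>\<omega>. indicator B \<omega> * W (sq t n) \<omega> \<partial>M) - (\<integral>\<omega>. indicator B \<omega> * cx Y (sq t n) \<omega> \<partial>M)"
          using iW[OF sq0(1)] iC by (simp add: right_diff_distrib)
        also have "(\<integral>\<omega>. indicator B \<omega> * W (sq t n) \<omega> \<partial>M) = (\<integral>\<omega>. indicator B \<omega> * X \<omega> \<partial>M)"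
          by (rule W_intB[OF sq0(1) sq0(3) Bn])
        also have "(\<integral>\<omega>. indicator B \<omega> * cx Y (sq t n) \<omega> \<partial>M) = (\<integral>\<omega>. indicator B \<omega> * Y \<omega> \<partial>M)"
          by (rule cx_intA[OF Y_int sq0(1) Bn])
        finally show ?thesis .
      qed
    qed
    then have le: "(\<integral>\<omega>. indicator B \<omega> * (W t \<omega> - V \<omega>) \<partial>M) \<le> (\<integral>\<omega>. indicator B \<omega> * X \<omega> \<partial>M) - (\<integral>\<omega>. indicator B \<omega> * Y \<omega> \<partial>M)"
      by simp
    have "(\<integral>\<omega>. indicator B \<omega> * (W t \<omega> - V \<omega>) \<partial>M) = (\<integral>\<omega>. indicator B \<omega> * W t \<omega> \<partial>M) - (\<integral>\<omega>. indicator B \<omega> * V \<omega> \<partial>M)"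
      using iW[OF t(1)] iV by (simp add: right_diff_distrib)
    also have "(\<integral>\<omega>. indicator B \<omega> * W t \<omega> \<partial>M) = (\<integral>\<omega>. indicator B \<omega> * X \<omega> \<partial>M)"
      using t by (intro W_intB B) auto
    finally show ?thesis using le by simp
  qed
  have "AE \<omega> in M. real_cond_exp M (F t) Y \<omega> = V \<omega>"
  proof (rule S.real_cond_exp_charact[OF _ Y_int Vint VF])
    fix B assume B: "B \<in> sets (F t)"
    have "(\<integral>\<omega>. indicator B \<omega> * Y \<omega> \<partial>M) = (\<integral>\<omega>. indicator B \<omega> * V \<omega> \<partial>M)"
      using part1[OF B] part2[OF B] by simp
    then show "(\<integral>\<omega>\<in>B. Y \<omega> \<partial>M) = (\<integral>\<omega>\<in>B. V \<omega> \<partial>M)"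
      by (simp add: set_lebesgue_integral_def)
  qed
  then show ?thesis by (simp add: V_def)
qed

lemma Wt_ce1:
  assumes t: "0 \<le> t"
  shows "AE \<omega> in M. Wt t \<omega> = real_cond_exp M (F t) (\<lambda>\<omega>. indicator A \<omega> * W (max t t0) \<omega>) \<omega>"
proof (cases "t < t0")
  case True
  have "max t t0 = t0" using True by simp
  then have e: "(\<lambda>\<omega>. indicator A \<omega> * W (max t t0) \<omega>) = Y" by (simp add: Y_def[abs_def])
  show ?thesis unfolding e using fatou_ident[OF t True] by eventually_elim simp
next
  case False
  interpret S: sigma_finite_subalgebra M "F t" by (rule sfs[OF t])
  have m: "max t t0 = t" using False by simp
  have [measurable]: "A \<in> sets (F t)" using A_F False by simp
  have [measurable]: "W t \<in> borel_measurable (F t)" by (rule W_F[OF t])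
  have "AE \<omega> in M. real_cond_exp M (F t) (\<lambda>\<omega>. indicator A \<omega> * W t \<omega>) \<omega> = indicator A \<omega> * W t \<omega>"
  proof (rule S.real_cond_exp_F_meas)
    show "integrable M (\<lambda>\<omega>. indicator A \<omega> * W t \<omega>)"
      using integrable_mult_indicator[OF A_M W_int[OF t]] by simp
    show "(\<lambda>\<omega>. indicator A \<omega> * W t \<omega>) \<in> borel_measurable (F t)" by measurable
  qed
  then show ?thesis unfolding m by eventually_elim (use False in \<open>simp add: Wt_def\<close>)
qed

end


context main_setting
begin

lemma ind_int: "integrable M (indicator A :: 'a \<Rightarrow> real)"
proof -
  have "integrable M (\<lambda>\<omega>. indicator A \<omega> *\<^sub>R (1::real))"
    by (rule Bochner_Integration.integrable_indicator[OF A_M]) (simp add: less_top[symmetric])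
  then show ?thesis by simp
qed

lemma h_pointwise:
  assumes s: "0 \<le> s"
  shows "AE \<omega> in M. h_EZ \<theta> (Ut s \<omega>) (Wt s \<omega>) = indicator A \<omega> * (if t0 \<le> s then h_EZ \<theta> (U s \<omega>) (W s \<omega>) else 0)"
proof (cases "t0 \<le> s")
  case False
  have "AE \<omega> in M. Ut s \<omega> = real_cond_exp M (F s) (indicator A) \<omega> * U s \<omega>" using Utce s by blast
  then show ?thesis
    using AE_space
  proof eventually_elim
    case (elim \<omega>)
    have "U s \<omega> = 0" using Uzero s False elim(2) by auto
    then show ?case using elim(1) False by (simp add: h_EZ_def)
  qed
next
  case True
  interpret S: sigma_finite_subalgebra M "F s" by (rule sfs[OF s])
  have [measurable]: "A \<in> sets (F s)" using A_F True by simp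
  have c1: "AE \<omega> in M. real_cond_exp M (F s) (indicator A) \<omega> = indicator A \<omega>"
    by (rule S.real_cond_exp_F_meas[OF ind_int]) measurable
  have c2: "AE \<omega> in M. Ut s \<omega> = real_cond_exp M (F s) (indicator A) \<omega> * U s \<omega>" using Utce s by blast
  show ?thesis
    using c1 c2
  proof eventually_elim
    case (elim \<omega>)
    have "Wt s \<omega> = indicator A \<omega> * W s \<omega>" using True by (simp add: Wt_def)
    then show ?case using elim True by (cases "\<omega> \<in> A") (simp_all add: h_EZ_def)
  qed
qed

definition J :: "real \<Rightarrow> 'a \<Rightarrow> ennreal" where
  "J t \<omega> = (\<integral>\<^sup>+ s\<in>{t..}. ennreal (h_EZ \<theta> (Ut s \<omega>) (Wt s \<omega>)) \<partial>lborel)"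

lemma G1_meas: "(\<lambda>p. ennreal (h_EZ \<theta> (bar Ut (fst p) (snd p)) (bar Wt (fst p) (snd p)))) \<in> borel_measurable (lborel \<Otimes>\<^sub>M M)"
proof -
  have [measurable]: "(\<lambda>p. bar Ut (fst p) (snd p)) \<in> borel_measurable (lborel \<Otimes>\<^sub>M M)"
    by (rule bar_meas[OF Utprog])
  have [measurable]: "(\<lambda>p. bar Wt (fst p) (snd p)) \<in> borel_measurable (lborel \<Otimes>\<^sub>M M)"
    by (rule bar_meas[OF Wt_prog])
  show ?thesis by measurable
qed

lemma G2_meas: "(\<lambda>p. ennreal (indicator A (snd p) * (if t0 \<le> fst p then h_EZ \<theta> (bar U (fst p) (snd p)) (bar W (fst p) (snd p)) else 0))) \<in> borel_measurable (lborel \<Otimes>\<^sub>M M)"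
proof -
  have [measurable]: "(\<lambda>p. bar U (fst p) (snd p)) \<in> borel_measurable (lborel \<Otimes>\<^sub>M M)"
    by (rule bar_meas[OF Uprog])
  have [measurable]: "(\<lambda>p. bar W (fst p) (snd p)) \<in> borel_measurable (lborel \<Otimes>\<^sub>M M)"
    by (rule bar_meas[OF Wprog])
  have [measurable]: "A \<in> sets M" by (rule A_M)
  show ?thesis by measurable
qed

lemma J_meas: "0 \<le> t \<Longrightarrow> J t \<in> borel_measurable M"
  unfolding J_def[abs_def] by (rule nn_int_meas[OF G1_meas]) (auto simp: bar_def)

lemma J_eq:
  assumes t: "0 \<le> t"
  shows "AE \<omega> in M. J t \<omega> = ennreal (indicator A \<omega>) * I (max t t0) \<omega>"
proof -
  have ae: "AE \<omega> in M. (\<integral>\<^sup>+ s\<in>{t..}. ennreal (h_EZ \<theta> (bar Ut s \<omega>) (bar Wt s \<omega>)) \<partial>lborel)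
     = (\<integral>\<^sup>+ s\<in>{t..}. ennreal (indicator A \<omega> * (if t0 \<le> s then h_EZ \<theta> (bar U s \<omega>) (bar W s \<omega>) else 0)) \<partial>lborel)"
  proof (rule fubini_ae[OF _ G1_meas G2_meas])
    show "sigma_finite_measure M" by (rule sigma_finite_measure_axioms)
    fix s assume "t \<le> s"
    then have s: "0 \<le> s" using t by simp
    show "AE \<omega> in M. ennreal (h_EZ \<theta> (bar Ut s \<omega>) (bar Wt s \<omega>)) =
        ennreal (indicator A \<omega> * (if t0 \<le> s then h_EZ \<theta> (bar U s \<omega>) (bar W s \<omega>) else 0))"
      using h_pointwise[OF s] by eventually_elim (use s in \<open>simp add: bar_def\<close>)
  qed
  then show ?thesis
  proof eventually_elim
    case (elim \<omega>)
    have l: "J t \<omega> = (\<integral>\<^sup>+ s\<in>{t..}. ennreal (h_EZ \<theta> (bar Ut s \<omega>) (bar Wt s \<omega>)) \<partial>lborel)"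
      unfolding J_def by (rule nn_integral_cong) (use t in \<open>auto simp: bar_def indicator_def\<close>)
    have r: "(\<integral>\<^sup>+ s\<in>{t..}. ennreal (indicator A \<omega> * (if t0 \<le> s then h_EZ \<theta> (bar U s \<omega>) (bar W s \<omega>) else 0)) \<partial>lborel)
        = ennreal (indicator A \<omega>) * I (max t t0) \<omega>"
    proof (cases "\<omega> \<in> A")
      case True
      have "(\<integral>\<^sup>+ s\<in>{t..}. ennreal (indicator A \<omega> * (if t0 \<le> s then h_EZ \<theta> (bar U s \<omega>) (bar W s \<omega>) else 0)) \<partial>lborel)
          = (\<integral>\<^sup>+ s\<in>{max t t0..}. ennreal (h_EZ \<theta> (U s \<omega>) (W s \<omega>)) \<partial>lborel)"
        by (rule nn_integral_cong) (use t True in \<open>auto simp: bar_def indicator_def\<close>)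
      then show ?thesis using True by (simp add: I_def)
    next
      case False
      then show ?thesis by simp
    qed
    show ?case using elim l r by simp
  qed
qed

lemma Wt_int: "(\<integral>\<^sup>+\<omega>. (\<integral>\<^sup>+ s\<in>{0..}. ennreal (h_EZ \<theta> (Ut s \<omega>) (Wt s \<omega>)) \<partial>lborel) \<partial>M) < \<infinity>"
proof -
  have "(\<integral>\<^sup>+\<omega>. (\<integral>\<^sup>+ s\<in>{0..}. ennreal (h_EZ \<theta> (Ut s \<omega>) (Wt s \<omega>)) \<partial>lborel) \<partial>M)
      = (\<integral>\<^sup>+\<omega>. ennreal (indicator A \<omega>) * I t0 \<omega> \<partial>M)"
    by (rule nn_integral_cong_AE) (use J_eq[of 0] t0 in \<open>simp add: J_def\<close>)
  also have "\<dots> \<le> (\<integral>\<^sup>+\<omega>. I 0 \<omega> \<partial>M)"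
  proof (rule nn_integral_mono)
    fix \<omega>
    have "ennreal (indicator A \<omega>) * I t0 \<omega> \<le> 1 * I t0 \<omega>"
      by (intro mult_right_mono) (auto simp: indicator_def)
    also have "\<dots> \<le> I 0 \<omega>" using I_mono[of 0 t0] t0 by simp
    finally show "ennreal (indicator A \<omega>) * I t0 \<omega> \<le> I 0 \<omega>" .
  qed
  also have "\<dots> < \<infinity>" using I_int[of 0] by simp
  finally show ?thesis .
qed

lemma Wt_ce2:
  assumes t: "0 \<le> t"
  shows "AE \<omega> in M. Wt t \<omega> = real_cond_exp M (F t) (\<lambda>\<omega>. enn2real (J t \<omega>)) \<omega>"
proof -
  define t' where "t' = max t t0"
  have t': "0 \<le> t'" "t \<le> t'" "t0 \<le> t'" using t t0 by (auto simp: t'_def)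
  interpret S: sigma_finite_subalgebra M "F t" by (rule sfs[OF t])
  interpret S': sigma_finite_subalgebra M "F t'" by (rule sfs[OF t'(1)])
  have [measurable]: "A \<in> sets (F t')" using A_F t' by simp
  have [measurable]: "A \<in> sets M" by (rule A_M)
  have [measurable]: "Z t' \<in> borel_measurable M" by (rule Z_meas[OF t'(1)])
  have [measurable]: "W t' \<in> borel_measurable M" by (rule W_M[OF t'(1)])
  have [measurable]: "J t \<in> borel_measurable M" by (rule J_meas[OF t])
  have iAZ: "integrable M (\<lambda>\<omega>. indicator A \<omega> * Z t' \<omega>)"
    using integrable_mult_indicator[OF A_M Z_int[OF t'(1)]] by simp
  have e1: "AE \<omega> in M. real_cond_exp M (F t) (\<lambda>\<omega>. enn2real (J t \<omega>)) \<omega> = real_cond_exp M (F t) (\<lambda>\<omega>. indicator A \<omega> * Z t' \<omega>) \<omega>"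
  proof (rule S.real_cond_exp_cong)
    show "AE \<omega> in M. enn2real (J t \<omega>) = indicator A \<omega> * Z t' \<omega>"
      using J_eq[OF t] by eventually_elim (simp add: Z_def t'_def enn2real_mult)
  qed measurable
  have e2: "AE \<omega> in M. real_cond_exp M (F t) (real_cond_exp M (F t') (\<lambda>\<omega>. indicator A \<omega> * Z t' \<omega>)) \<omega>
      = real_cond_exp M (F t) (\<lambda>\<omega>. indicator A \<omega> * Z t' \<omega>) \<omega>"
    by (rule S.real_cond_exp_nested_subalg[OF subalg[OF t'(1)] subalg2[OF t t'(2)] iAZ])
  have e3: "AE \<omega> in M. real_cond_exp M (F t') (\<lambda>\<omega>. indicator A \<omega> * Z t' \<omega>) \<omega> = indicator A \<omega> * W t' \<omega>"
  proof -
    have a: "AE \<omega> in M. real_cond_exp M (F t') (\<lambda>\<omega>. indicator A \<omega> * Z t' \<omega>) \<omega> = indicator A \<omega> * real_cond_exp M (F t') (Z t') \<omega>"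
      by (rule S'.real_cond_exp_mult[OF _ _ iAZ]) measurable
    show ?thesis using a Wce'[OF t'(1)] by eventually_elim simp
  qed
  have e4: "AE \<omega> in M. real_cond_exp M (F t) (real_cond_exp M (F t') (\<lambda>\<omega>. indicator A \<omega> * Z t' \<omega>)) \<omega>
      = real_cond_exp M (F t) (\<lambda>\<omega>. indicator A \<omega> * W t' \<omega>) \<omega>"
    by (rule S.real_cond_exp_cong[OF e3]) measurable
  have e5: "AE \<omega> in M. Wt t \<omega> = real_cond_exp M (F t) (\<lambda>\<omega>. indicator A \<omega> * W t' \<omega>) \<omega>"
    unfolding t'_def by (rule Wt_ce1[OF t])
  show ?thesis using e1 e2 e4 e5 by eventually_elim simp
qed

lemma main_result:
  "\<exists>Wt. (\<forall>t\<ge>0. AE \<omega> in M.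
              Wt t \<omega> = real_cond_exp M (F t) (\<lambda>\<omega>. indicator A \<omega> * W (max t t0) \<omega>) \<omega>)
          \<and> utility_process M F (h_EZ \<theta>) Ut Wt"
proof (intro exI conjI allI impI)
  show "AE \<omega> in M. Wt t \<omega> = real_cond_exp M (F t) (\<lambda>\<omega>. indicator A \<omega> * W (max t t0) \<omega>) \<omega>"
    if "0 \<le> t" for t using Wt_ce1[OF that] .
  show "utility_process M F (h_EZ \<theta>) Ut Wt"
    unfolding utility_process_def
  proof (intro conjI allI impI)
    show "nonneg_process M Wt" unfolding nonneg_process_def using Wt_nn by blast
    show "cadlag M Wt" by (rule Wt_cadlag)
    show "prog_measurable M F Wt" by (rule Wt_prog)
    show "(\<integral>\<^sup>+\<omega>. (\<integral>\<^sup>+ s\<in>{0..}. ennreal (h_EZ \<theta> (Ut s \<omega>) (Wt s \<omega>)) \<partial>lborel) \<partial>M) < \<infinity>"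
      by (rule Wt_int)
    fix t :: real assume "0 \<le> t"
    show "AE \<omega> in M. Wt t \<omega> = real_cond_exp M (F t)
          (\<lambda>\<omega>. enn2real (\<integral>\<^sup>+ s\<in>{t..}. ennreal (h_EZ \<theta> (Ut s \<omega>) (Wt s \<omega>)) \<partial>lborel)) \<omega>"
      using Wt_ce2[OF \<open>0 \<le> t\<close>] by (simp add: J_def)
  qed
qed

end

theorem lemma8p2:
  fixes M :: "'a measure" and F :: "real \<Rightarrow> 'a measure"
    and \<theta> t0 :: real and U W Ut :: "real \<Rightarrow> 'a \<Rightarrow> real" and A :: "'a set"
  assumes "std_filtration M F" and "\<theta> > 1"
    and "nonneg_process M U" and "prog_measurable M F U"
    and "utility_process M F (h_EZ \<theta>) U W"
    and "t0 \<ge> 0" and "\<forall>t. 0 \<le> t \<and> t < t0 \<longrightarrow> (\<forall>\<omega>\<in>space M. U t \<omega> = 0)"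
    and "A \<in> sets (F t0)"
    and "nonneg_process M Ut" and "prog_measurable M F Ut"
    and "\<forall>t\<ge>0. AE \<omega> in M. Ut t \<omega> = real_cond_exp M (F t) (indicator A) \<omega> * U t \<omega>"
  shows "\<exists>Wt. (\<forall>t\<ge>0. AE \<omega> in M.
              Wt t \<omega> = real_cond_exp M (F t) (\<lambda>\<omega>. indicator A \<omega> * W (max t t0) \<omega>) \<omega>)
          \<and> utility_process M F (h_EZ \<theta>) Ut Wt"
proof -
  interpret main_setting M F \<theta> t0 U W Ut A
    by (intro main_setting.intro filt.intro main_setting_axioms.intro) (use assms in auto)
  show ?thesis by (rule main_result)
qed


end
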